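(* Let $Q$ be a finite acyclic quiver with automorphism $\sigma$ and let $\alpha\in\mathcal F_{Q,\sigma}$. Then every primitive element $x\in\mathcal H_v(Q,\sigma)^{\rm prim}_\alpha$ satisfies $\mathbb I_\alpha(x)=\{x,\mathbf 1_\alpha\}=0$; that is, $\mathcal H_v(Q,\sigma)^{\rm prim}_\alpha\subseteq\operatorname{Ker}\mathbb I_\alpha$.
   Context: Let $Q=(Q_0,Q_1)$ be a finite quiver and $\sigma$ an automorphism of $Q$ (a permutation of vertices and arrows compatible with heads and tails). Let $\mathbb F_q$ be a finite field, $\overline{\mathbb F}_q$ its algebraic closure, $F:\overline{\mathbb F}_qQ\to\overline{\mathbb F}_qQ$, $\sum_sx_sp_s\mapsto\sum_sx_s^q\sigma(p_s)$, and $A=\mathfrak A(Q,\sigma;q)=\{a:F(a)=a\}$ (a hereditary $\mathbb F_q$-algebra, finite-dimensional when $Q$ is acyclic). Let $I$ be the set of $\sigma$-orbits of vertices, $\Gamma_1$ the set of $\sigma$-orbits of arrows, $\varepsilon_i,\varepsilon_\rho$ the orbit sizes, and $t\rho,h\rho\in I$ the tail/head orbits of $\rho\in\Gamma_1$; $\Gamma=\Gamma(Q,\sigma)$ is the valued quiver with vertices $I$ and arrows $\Gamma_1$. Euler form: $\langle x,y\rangle=\sum_i\varepsilon_ix_iy_i-\sum_{\rho\in\Gamma_1}\varepsilon_\rho x_{t\rho}y_{h\rho}$ on $\mathbb ZI$; symmetric Euler form $(x,y)=\langle x,y\rangle+\langle y,x\rangle$. The dimension vector of an $A$-module $M$ is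 $\mathbf{dim}M=\sum_i(\dim_{\mathbb F_{q^{\varepsilon_i}}}e_iM)i$, $e_i$ the idempotent of $A$ for $i\in I$. The fundamental set is $\mathcal F_{Q,\sigma}=\{\mu\in\mathbb NI:$ the full subquiver of $\Gamma$ on $\{i:\mu_i\ne0\}$ is connected and $(\mu,i)\le0$ for all $i\in I\}$. With $F^L_{M,N}$ the number of submodules $X\subseteq L$ with $X\cong N$, $L/X\cong M$, $a_M=|\mathrm{Aut}_A(M)|$ and $v=\sqrt q$, the Ringel–Hall algebra $\mathcal H_v(Q,\sigma)$ has $\mathbb C$-basis the isoclasses $[M]$ of finite-dimensional $A$-modules, product $[M][N]=\sum_{[L]}v^{\langle\mathbf{dim}M,\mathbf{dim}N\rangle}F^L_{M,N}[L]$, coproduct $\Delta([M])=\sum_{[X],[Y]}v^{\langle\mathbf{dim}X,\mathbf{dim}Y\rangle}\frac{a_Xa_Y}{a_M}F^M_{X,Y}[X]\otimes[Y]$, unit $1=[0]$, and $\mathbb NI$-grading by dimension vectors. $\mathcal H_v(Q,\sigma)^{\rm prim}_{\mathbf d}=\{x\in\mathcal H_v(Q,\sigma)_{\mathbf d}:\Delta(x)=x\otimes1+1\otimes x\}$. The Green form is $\{[M],[N]\}=\delta_{[M],[N]}/a_M$. Put $\mathbf 1_{\mathbf d}=\sum_{[M]:\mathbf{dim}M=\mathbf d}[M]$ and $\mathbb I_{\mathbf d}:\mathcal H_v(Q,\sigma)_{\mathbf d}\to\mathbb C$, $[M]\mapsto 1/a_M$, so $\mathbb I_{\mathbf d}(x)=\{x,\mathbf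 1_{\mathbf d}\}$. *)

theory Defs
  imports Complex_Main "HOL-Library.FuncSet" "HOL-Computational_Algebra.Primes"
begin

section \<open>Quivers, paths and the algebra A = A(Q,sigma;q)\<close>

text \<open>A path is (start vertex, list of arrows in order
  of traversal); the trivial path at v is (v, []).\<close>

type_synonym ('v,'e) qpath = "'v \<times> 'e list"

fun pvalid :: "('e \<Rightarrow> 'v) \<Rightarrow> ('e \<Rightarrow> 'v) \<Rightarrow> 'v \<Rightarrow> 'e list \<Rightarrow> bool" where
  "pvalid src tgt v [] = True"
| "pvalid src tgt v (a # as) = (src a = v \<and> pvalid src tgt (tgt a) as)"

fun pend :: "('e \<Rightarrow> 'v) \<Rightarrow> 'v \<Rightarrow> 'e list \<Rightarrow> 'v" where
  "pend tgt v [] = v"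
| "pend tgt v (a # as) = pend tgt (tgt a) as"

definition Paths :: "('e \<Rightarrow> 'v) \<Rightarrow> ('e \<Rightarrow> 'v) \<Rightarrow> ('v,'e) qpath set" where
  "Paths src tgt = {(v, as). pvalid src tgt v as}"

definition quiver_acyclic :: "('e \<Rightarrow> 'v) \<Rightarrow> ('e \<Rightarrow> 'v) \<Rightarrow> bool" where
  "quiver_acyclic src tgt \<longleftrightarrow>
     (\<forall>v as. pvalid src tgt v as \<and> as \<noteq> [] \<longrightarrow> pend tgt v as \<noteq> v)"

definition quiver_aut :: "('e \<Rightarrow> 'v) \<Rightarrow> ('e \<Rightarrow> 'v) \<Rightarrow> ('v \<Rightarrow> 'v) \<Rightarrow> ('e \<Rightarrow> 'e) \<Rightarrow> bool" where
  "quiver_aut src tgt sv se \<longleftrightarrow> bij sv \<and> bij se \<and>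
     (\<forall>a. src (se a) = sv (src a) \<and> tgt (se a) = sv (tgt a))"

text \<open>Elements of the path algebra KQ over a field K: functions from paths to K,
  vanishing outside the set of valid paths (finitely many, Q acyclic).
  Multiplication: r * s = "first s, then r" (so left modules are representations of Q).\<close>

definition pa_add :: "('p \<Rightarrow> 'k::field) \<Rightarrow> ('p \<Rightarrow> 'k) \<Rightarrow> 'p \<Rightarrow> 'k" where
  "pa_add x y = (\<lambda>p. x p + y p)"

definition pa_mult :: "('e \<Rightarrow> 'v) \<Rightarrow> ('e \<Rightarrow> 'v) \<Rightarrow> (('v,'e) qpath \<Rightarrow> 'k::field)
    \<Rightarrow> (('v,'e) qpath \<Rightarrow> 'k) \<Rightarrow> ('v,'e) qpath \<Rightarrow> 'k" where
  "pa_mult src tgt x y = (\<lambda>p. \<Sum>(r, s) \<in> {(r, s). r \<in> Paths src tgt \<and> s \<in> Paths src tgt \<and>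
        pend tgt (fst s) (snd s) = fst r \<and> (fst s, snd s @ snd r) = p}. x r * y s)"

definition pa_one :: "('v,'e) qpath \<Rightarrow> 'k::field" where
  "pa_one = (\<lambda>p. if snd p = [] then 1 else 0)"

definition psig :: "('v \<Rightarrow> 'v) \<Rightarrow> ('e \<Rightarrow> 'e) \<Rightarrow> ('v,'e) qpath \<Rightarrow> ('v,'e) qpath" where
  "psig sv se p = (sv (fst p), map se (snd p))"

text \<open>A = {a : F(a) = a} with F(sum x_p p) = sum x_p^q sigma(p), i.e. x(sigma p) = (x p)^q.\<close>
definition Alg :: "('e \<Rightarrow> 'v) \<Rightarrow> ('e \<Rightarrow> 'v) \<Rightarrow> ('v \<Rightarrow> 'v) \<Rightarrow> ('e \<Rightarrow> 'e) \<Rightarrow> nat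
    \<Rightarrow> (('v,'e) qpath \<Rightarrow> 'k::field) set" where
  "Alg src tgt sv se q = {x. (\<forall>p. p \<notin> Paths src tgt \<longrightarrow> x p = 0) \<and>
                            (\<forall>p. x (psig sv se p) = x p ^ q)}"

record ('r, 'm) amod =
  mcar :: "'m set"
  madd :: "'m \<Rightarrow> 'm \<Rightarrow> 'm"
  mzero :: "'m"
  msmult :: "'r \<Rightarrow> 'm \<Rightarrow> 'm"

text \<open>Finite-dimensional (equivalently: finite, as A and F_q are finite) left A-modules.\<close>
definition is_amod :: "('e \<Rightarrow> 'v) \<Rightarrow> ('e \<Rightarrow> 'v) \<Rightarrow> ('v \<Rightarrow> 'v) \<Rightarrow> ('e \<Rightarrow> 'e) \<Rightarrow> nat
    \<Rightarrow> (('v,'e) qpath \<Rightarrow> 'k::field, 'm) amod \<Rightarrow> bool" where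
  "is_amod src tgt sv se q M \<longleftrightarrow>
     (let A = Alg src tgt sv se q in
     finite (mcar M) \<and> mzero M \<in> mcar M \<and>
     (\<forall>x\<in>mcar M. \<forall>y\<in>mcar M. madd M x y \<in> mcar M) \<and>
     (\<forall>x\<in>mcar M. \<forall>y\<in>mcar M. \<forall>z\<in>mcar M. madd M (madd M x y) z = madd M x (madd M y z)) \<and>
     (\<forall>x\<in>mcar M. \<forall>y\<in>mcar M. madd M x y = madd M y x) \<and>
     (\<forall>x\<in>mcar M. madd M (mzero M) x = x) \<and>
     (\<forall>x\<in>mcar M. \<exists>y\<in>mcar M. madd M x y = mzero M) \<and>
     (\<forall>a\<in>A. \<forall>x\<in>mcar M. msmult M a x \<in> mcar M) \<and>
     (\<forall>a\<in>A. \<forall>x\<in>mcar M. \<forall>y\<in>mcar M.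
         msmult M a (madd M x y) = madd M (msmult M a x) (msmult M a y)) \<and>
     (\<forall>a\<in>A. \<forall>b\<in>A. \<forall>x\<in>mcar M. msmult M (pa_add a b) x = madd M (msmult M a x) (msmult M b x)) \<and>
     (\<forall>a\<in>A. \<forall>b\<in>A. \<forall>x\<in>mcar M. msmult M (pa_mult src tgt a b) x = msmult M a (msmult M b x)) \<and>
     (\<forall>x\<in>mcar M. msmult M pa_one x = x))"

definition amod_iso :: "'r set \<Rightarrow> ('r, 'm) amod \<Rightarrow> ('r, 'n) amod \<Rightarrow> ('m \<Rightarrow> 'n) \<Rightarrow> bool" where
  "amod_iso A M N f \<longleftrightarrow> bij_betw f (mcar M) (mcar N) \<and>
     (\<forall>x\<in>mcar M. \<forall>y\<in>mcar M. f (madd M x y) = madd N (f x) (f y)) \<and>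
     (\<forall>a\<in>A. \<forall>x\<in>mcar M. f (msmult M a x) = msmult N a (f x))"

definition amod_isom :: "'r set \<Rightarrow> ('r, 'm) amod \<Rightarrow> ('r, 'n) amod \<Rightarrow> bool" where
  "amod_isom A M N \<longleftrightarrow> (\<exists>f. amod_iso A M N f)"

definition aut_num :: "'r set \<Rightarrow> ('r, 'm) amod \<Rightarrow> nat" where
  "aut_num A M = card {f \<in> mcar M \<rightarrow>\<^sub>E mcar M. amod_iso A M M f}"

definition submod :: "'r set \<Rightarrow> ('r, 'm) amod \<Rightarrow> 'm set \<Rightarrow> bool" where
  "submod A L X \<longleftrightarrow> X \<subseteq> mcar L \<and> mzero L \<in> X \<and>
     (\<forall>x\<in>X. \<forall>y\<in>X. madd L x y \<in> X) \<and>
     (\<forall>x\<in>X. \<exists>y\<in>X. madd L x y = mzero L) \<and>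
     (\<forall>a\<in>A. \<forall>x\<in>X. msmult L a x \<in> X)"

definition mcoset :: "('r, 'm) amod \<Rightarrow> 'm set \<Rightarrow> 'm \<Rightarrow> 'm set" where
  "mcoset L X x = madd L x ` X"

definition quotmod :: "('r, 'm) amod \<Rightarrow> 'm set \<Rightarrow> ('r, 'm set) amod" where
  "quotmod L X = \<lparr> mcar = mcoset L X ` mcar L,
      madd = (\<lambda>C D. mcoset L X (madd L (SOME c. c \<in> C) (SOME d. d \<in> D))),
      mzero = mcoset L X (mzero L),
      msmult = (\<lambda>a C. mcoset L X (msmult L a (SOME c. c \<in> C))) \<rparr>"

definition hall_num :: "'r set \<Rightarrow> ('r, 'm) amod \<Rightarrow> ('r, 'n) amod \<Rightarrow> ('r, 'p) amod \<Rightarrow> nat" where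
  "hall_num A L M N = card {X. submod A L X \<and> amod_isom A (L\<lparr>mcar := X\<rparr>) N \<and>
                               amod_isom A (quotmod L X) M}"

section \<open>The valued quiver Gamma, dimension vectors, Euler form, fundamental set\<close>

definition vorb :: "('v \<Rightarrow> 'v) \<Rightarrow> 'v \<Rightarrow> 'v set" where
  "vorb sv v = {(sv ^^ n) v | n. True}"

definition eorb :: "('e \<Rightarrow> 'e) \<Rightarrow> 'e \<Rightarrow> 'e set" where
  "eorb se a = {(se ^^ n) a | n. True}"

definition Iset :: "('v \<Rightarrow> 'v) \<Rightarrow> 'v set set" where
  "Iset sv = range (vorb sv)"

definition Gam1 :: "('e \<Rightarrow> 'e) \<Rightarrow> 'e set set" where
  "Gam1 se = range (eorb se)"

definition torb :: "('e \<Rightarrow> 'v) \<Rightarrow> ('v \<Rightarrow> 'v) \<Rightarrow> 'e set \<Rightarrow> 'v set" where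
  "torb src sv \<rho> = vorb sv (src (SOME a. a \<in> \<rho>))"

definition horb :: "('e \<Rightarrow> 'v) \<Rightarrow> ('v \<Rightarrow> 'v) \<Rightarrow> 'e set \<Rightarrow> 'v set" where
  "horb tgt sv \<rho> = vorb sv (tgt (SOME a. a \<in> \<rho>))"

text \<open>Elements of ZI are functions 'v set => int vanishing outside I.
  Euler form <x,y> = sum_i eps_i x_i y_i - sum_rho eps_rho x_{t rho} y_{h rho}.\<close>
definition euler :: "('e \<Rightarrow> 'v) \<Rightarrow> ('e \<Rightarrow> 'v) \<Rightarrow> ('v \<Rightarrow> 'v) \<Rightarrow> ('e \<Rightarrow> 'e)
    \<Rightarrow> ('v set \<Rightarrow> int) \<Rightarrow> ('v set \<Rightarrow> int) \<Rightarrow> int" where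
  "euler src tgt sv se x y =
     (\<Sum>i\<in>Iset sv. int (card i) * x i * y i) -
     (\<Sum>\<rho>\<in>Gam1 se. int (card \<rho>) * x (torb src sv \<rho>) * y (horb tgt sv \<rho>))"

definition symform :: "('e \<Rightarrow> 'v) \<Rightarrow> ('e \<Rightarrow> 'v) \<Rightarrow> ('v \<Rightarrow> 'v) \<Rightarrow> ('e \<Rightarrow> 'e)
    \<Rightarrow> ('v set \<Rightarrow> int) \<Rightarrow> ('v set \<Rightarrow> int) \<Rightarrow> int" where
  "symform src tgt sv se x y = euler src tgt sv se x y + euler src tgt sv se y x"

definition unitv :: "'v set \<Rightarrow> 'v set \<Rightarrow> int" where
  "unitv i = (\<lambda>j. if j = i then 1 else 0)"

definition gamma_connected :: "('e \<Rightarrow> 'v) \<Rightarrow> ('e \<Rightarrow> 'v) \<Rightarrow> ('v \<Rightarrow> 'v) \<Rightarrow> ('e \<Rightarrow> 'e)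
    \<Rightarrow> 'v set set \<Rightarrow> bool" where
  "gamma_connected src tgt sv se S \<longleftrightarrow> S \<noteq> {} \<and>
     (\<forall>i\<in>S. \<forall>j\<in>S. (i, j) \<in> ({(k, l). k \<in> S \<and> l \<in> S \<and>
        (\<exists>\<rho>\<in>Gam1 se. (torb src sv \<rho> = k \<and> horb tgt sv \<rho> = l) \<or>
                     (torb src sv \<rho> = l \<and> horb tgt sv \<rho> = k))})\<^sup>*)"

definition fundamental_set :: "('e \<Rightarrow> 'v) \<Rightarrow> ('e \<Rightarrow> 'v) \<Rightarrow> ('v \<Rightarrow> 'v) \<Rightarrow> ('e \<Rightarrow> 'e)
    \<Rightarrow> ('v set \<Rightarrow> int) set" where
  "fundamental_set src tgt sv se = {\<mu>.
     (\<forall>i. 0 \<le> \<mu> i) \<and> (\<forall>i. i \<notin> Iset sv \<longrightarrow> \<mu> i = 0) \<and>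
     gamma_connected src tgt sv se {i \<in> Iset sv. \<mu> i \<noteq> 0} \<and>
     (\<forall>i\<in>Iset sv. symform src tgt sv se \<mu> (unitv i) \<le> 0)}"

definition eidem :: "'v set \<Rightarrow> ('v,'e) qpath \<Rightarrow> 'k::field" where
  "eidem i = (\<lambda>p. if snd p = [] \<and> fst p \<in> i then 1 else 0)"

text \<open>dim M at i = dim over F_{q^eps_i} of e_i M, read off from |e_i M| = (q^eps_i)^d.\<close>
definition dimv :: "('v \<Rightarrow> 'v) \<Rightarrow> nat \<Rightarrow> (('v,'e) qpath \<Rightarrow> 'k::field, 'm) amod
    \<Rightarrow> 'v set \<Rightarrow> int" where
  "dimv sv q M = (\<lambda>i. if i \<in> Iset sv
      then int (THE d. card (msmult M (eidem i) ` mcar M) = q ^ (card i * d)) else 0)"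

section \<open>The Ringel--Hall algebra (coefficient functions on isoclasses)\<close>

text \<open>Every finite A-module is isomorphic to one whose carrier is a subset of nat;
  isoclasses are the classes of such modules under isomorphism.\<close>
definition AMods :: "('e \<Rightarrow> 'v) \<Rightarrow> ('e \<Rightarrow> 'v) \<Rightarrow> ('v \<Rightarrow> 'v) \<Rightarrow> ('e \<Rightarrow> 'e) \<Rightarrow> nat
    \<Rightarrow> (('v,'e) qpath \<Rightarrow> 'k::field, nat) amod set" where
  "AMods src tgt sv se q = {M. is_amod src tgt sv se q M}"

definition isorel :: "('e \<Rightarrow> 'v) \<Rightarrow> ('e \<Rightarrow> 'v) \<Rightarrow> ('v \<Rightarrow> 'v) \<Rightarrow> ('e \<Rightarrow> 'e) \<Rightarrow> nat
    \<Rightarrow> ((('v,'e) qpath \<Rightarrow> 'k::field, nat) amod \<times> (('v,'e) qpath \<Rightarrow> 'k, nat) amod) set" where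
  "isorel src tgt sv se q = {(M, N). M \<in> AMods src tgt sv se q \<and> N \<in> AMods src tgt sv se q \<and>
        amod_isom (Alg src tgt sv se q) M N}"

definition isoclasses :: "('e \<Rightarrow> 'v) \<Rightarrow> ('e \<Rightarrow> 'v) \<Rightarrow> ('v \<Rightarrow> 'v) \<Rightarrow> ('e \<Rightarrow> 'e) \<Rightarrow> nat
    \<Rightarrow> (('v,'e) qpath \<Rightarrow> 'k::field, nat) amod set set" where
  "isoclasses src tgt sv se q = AMods src tgt sv se q // isorel src tgt sv se q"

definition crep :: "'a set \<Rightarrow> 'a" where
  "crep C = (SOME M. M \<in> C)"

definition zmod :: "('r, nat) amod" where
  "zmod = \<lparr> mcar = {0}, madd = (\<lambda>_ _. 0), mzero = 0, msmult = (\<lambda>_ _. 0) \<rparr>"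

definition zclass :: "('e \<Rightarrow> 'v) \<Rightarrow> ('e \<Rightarrow> 'v) \<Rightarrow> ('v \<Rightarrow> 'v) \<Rightarrow> ('e \<Rightarrow> 'e) \<Rightarrow> nat
    \<Rightarrow> (('v,'e) qpath \<Rightarrow> 'k::field, nat) amod set" where
  "zclass src tgt sv se q = isorel src tgt sv se q `` {zmod}"

definition classes_dim :: "('e \<Rightarrow> 'v) \<Rightarrow> ('e \<Rightarrow> 'v) \<Rightarrow> ('v \<Rightarrow> 'v) \<Rightarrow> ('e \<Rightarrow> 'e) \<Rightarrow> nat
    \<Rightarrow> ('v set \<Rightarrow> int) \<Rightarrow> (('v,'e) qpath \<Rightarrow> 'k::field, nat) amod set set" where
  "classes_dim src tgt sv se q d = {C \<in> isoclasses src tgt sv se q. dimv sv q (crep C) = d}"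

text \<open>An element x = sum_[M] x([M]) [M] of H_v(Q,sigma) is a finitely supported
  coefficient function on isoclasses; H_d consists of those supported on classes_dim d.\<close>
definition hall_hom :: "('e \<Rightarrow> 'v) \<Rightarrow> ('e \<Rightarrow> 'v) \<Rightarrow> ('v \<Rightarrow> 'v) \<Rightarrow> ('e \<Rightarrow> 'e) \<Rightarrow> nat
    \<Rightarrow> ('v set \<Rightarrow> int) \<Rightarrow> ((('v,'e) qpath \<Rightarrow> 'k::field, nat) amod set \<Rightarrow> complex) set" where
  "hall_hom src tgt sv se q d =
     {x. finite {C. x C \<noteq> 0} \<and> (\<forall>C. x C \<noteq> 0 \<longrightarrow> C \<in> classes_dim src tgt sv se q d)}"

text \<open>Coefficient of [X] tensor [Y] in Delta(x), with v = sqrt q: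
  Delta([M]) = sum v^<dim X, dim Y> a_X a_Y / a_M F^M_{X,Y} [X] tensor [Y].\<close>
definition hall_coprod :: "('e \<Rightarrow> 'v) \<Rightarrow> ('e \<Rightarrow> 'v) \<Rightarrow> ('v \<Rightarrow> 'v) \<Rightarrow> ('e \<Rightarrow> 'e) \<Rightarrow> nat
    \<Rightarrow> ((('v,'e) qpath \<Rightarrow> 'k::field, nat) amod set \<Rightarrow> complex)
    \<Rightarrow> (('v,'e) qpath \<Rightarrow> 'k, nat) amod set \<Rightarrow> (('v,'e) qpath \<Rightarrow> 'k, nat) amod set \<Rightarrow> complex" where
  "hall_coprod src tgt sv se q x X Y =
     (let A = Alg src tgt sv se q in
      \<Sum>M \<in> {C \<in> isoclasses src tgt sv se q. x C \<noteq> 0}.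
        x M * complex_of_real (sqrt (real q)) powi
                 euler src tgt sv se (dimv sv q (crep X)) (dimv sv q (crep Y))
            * of_nat (aut_num A (crep X)) * of_nat (aut_num A (crep Y)) / of_nat (aut_num A (crep M))
            * of_nat (hall_num A (crep M) (crep X) (crep Y)))"

text \<open>Primitive elements of degree d: Delta(x) = x tensor 1 + 1 tensor x.\<close>
definition hall_prim :: "('e \<Rightarrow> 'v) \<Rightarrow> ('e \<Rightarrow> 'v) \<Rightarrow> ('v \<Rightarrow> 'v) \<Rightarrow> ('e \<Rightarrow> 'e) \<Rightarrow> nat
    \<Rightarrow> ('v set \<Rightarrow> int) \<Rightarrow> ((('v,'e) qpath \<Rightarrow> 'k::field, nat) amod set \<Rightarrow> complex) set" where
  "hall_prim src tgt sv se q d = {x \<in> hall_hom src tgt sv se q d.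
     \<forall>X\<in>isoclasses src tgt sv se q. \<forall>Y\<in>isoclasses src tgt sv se q.
       hall_coprod src tgt sv se q x X Y =
         (if Y = zclass src tgt sv se q then x X else 0) +
         (if X = zclass src tgt sv se q then x Y else 0)}"

text \<open>I_d(x) = {x, 1_d} = sum over [M] of dimension d of x([M]) / a_M.\<close>
definition hall_I :: "('e \<Rightarrow> 'v) \<Rightarrow> ('e \<Rightarrow> 'v) \<Rightarrow> ('v \<Rightarrow> 'v) \<Rightarrow> ('e \<Rightarrow> 'e) \<Rightarrow> nat
    \<Rightarrow> ('v set \<Rightarrow> int) \<Rightarrow> ((('v,'e) qpath \<Rightarrow> 'k::field, nat) amod set \<Rightarrow> complex) \<Rightarrow> complex" where
  "hall_I src tgt sv se q d x =
     (\<Sum>C \<in> classes_dim src tgt sv se q d.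
        x C / of_nat (aut_num (Alg src tgt sv se q) (crep C)))"

end

theory Submission
  imports Defs
begin

lemma pvalid_append: "pvalid src tgt v (xs @ ys) = (pvalid src tgt v xs \<and> pvalid src tgt (pend tgt v xs) ys)"
  by (induction xs arbitrary: v) auto

lemma pend_append: "pend tgt v (xs @ ys) = pend tgt (pend tgt v xs) ys"
  by (induction xs arbitrary: v) auto

definition sinv :: "('v \<Rightarrow> 'v) \<Rightarrow> 'v set \<Rightarrow> bool" where
  "sinv sv S \<longleftrightarrow> (\<forall>v. (sv v \<in> S) = (v \<in> S))"

locale qs =
  fixes src tgt :: "'e::finite \<Rightarrow> 'v::finite"
    and sv :: "'v \<Rightarrow> 'v" and se :: "'e \<Rightarrow> 'e"
    and q N :: nat
  assumes aut: "quiver_aut src tgt sv se"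
    and acyc: "quiver_acyclic src tgt"
    and q2: "2 \<le> q"
    and Npos: "0 < N"
    and svN: "\<forall>v. (sv ^^ N) v = v" and seN: "\<forall>a. (se ^^ N) a = a"
begin

lemma src_se: "src (se a) = sv (src a)" and tgt_se: "tgt (se a) = sv (tgt a)"
  using aut unfolding quiver_aut_def by auto

lemma src_iter: "src ((se ^^ n) a) = (sv ^^ n) (src a)"
  by (induction n) (auto simp: src_se)
lemma tgt_iter: "tgt ((se ^^ n) a) = (sv ^^ n) (tgt a)"
  by (induction n) (auto simp: tgt_se)

lemma pend_map: "pend tgt ((sv ^^ n) v) (map (se ^^ n) as) = (sv ^^ n) (pend tgt v as)"
  by (induction as arbitrary: v) (auto simp: tgt_iter)

lemma pvalid_map: "pvalid src tgt v as \<Longrightarrow> pvalid src tgt ((sv ^^ n) v) (map (se ^^ n) as)"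
  by (induction as arbitrary: v) (auto simp: tgt_iter src_iter)

lemma pend_sig: "pend tgt (sv v) (map se as) = sv (pend tgt v as)"
  using pend_map[of 1] by simp

lemma inj_sv: "inj sv" using aut unfolding quiver_aut_def bij_def by auto

lemma pvalid_sig: "pvalid src tgt (sv v) (map se as) = pvalid src tgt v as"
  by (induction as arbitrary: v) (auto simp: src_se tgt_se inj_eq[OF inj_sv])

lemma svN_mult: "(sv ^^ (N * k)) v = v"
proof -
  have "sv ^^ N = id" using svN by auto
  have "sv ^^ (N * k) = (sv ^^ N) ^^ k" by (simp add: funpow_mult)
  also have "\<dots> = id" using \<open>sv ^^ N = id\<close> by (induction k) auto
  finally show ?thesis by simp
qed

lemma vorb_iter: "vorb sv ((sv ^^ n) v) = vorb sv v"
proof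
  show "vorb sv ((sv ^^ n) v) \<subseteq> vorb sv v"
    by (auto simp: vorb_def funpow_add[symmetric] simp del: funpow.simps) (metis comp_apply funpow_add)
  show "vorb sv v \<subseteq> vorb sv ((sv ^^ n) v)"
  proof
    fix w assume "w \<in> vorb sv v"
    then obtain m where w: "w = (sv ^^ m) v" by (auto simp: vorb_def)
    have "N * n \<ge> n" using Npos by simp
    have "(sv ^^ (m + N * n - n)) ((sv ^^ n) v) = (sv ^^ (m + N * n)) v"
    proof -
      have e: "m + N * n = (m + N * n - n) + n" using \<open>N * n \<ge> n\<close> by linarith
      show ?thesis by (subst e) (simp add: funpow_add)
    qed
    also have "\<dots> = (sv ^^ m) ((sv ^^ (N * n)) v)" by (simp add: funpow_add)
    also have "\<dots> = w" using w svN_mult by simp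
    finally show "w \<in> vorb sv ((sv ^^ n) v)" unfolding vorb_def by blast
  qed
qed

lemma vorb_self: "v \<in> vorb sv v"
  unfolding vorb_def by (auto intro: exI[of _ 0])

lemma vorb_mem: "u \<in> vorb sv v \<Longrightarrow> vorb sv u = vorb sv v"
  unfolding vorb_def using vorb_iter unfolding vorb_def by blast

lemma vorb_sv: "vorb sv (sv v) = vorb sv v"
  using vorb_iter[of 1] by simp

lemma orbit_disj: "i \<in> Iset sv \<Longrightarrow> j \<in> Iset sv \<Longrightarrow> i \<noteq> j \<Longrightarrow> i \<inter> j = {}"
  unfolding Iset_def using vorb_mem by blast

lemma orbit_sinv: "i \<in> Iset sv \<Longrightarrow> sinv sv i"
  unfolding Iset_def sinv_def using vorb_mem vorb_sv vorb_self by (metis image_iff)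

lemma sinv_Compl: "sinv sv S \<Longrightarrow> sinv sv (- S)"
  unfolding sinv_def by auto

lemma sinv_Union: "\<forall>i\<in>J. sinv sv i \<Longrightarrow> sinv sv (\<Union>J)"
  unfolding sinv_def by auto

lemma sinv_UNIV: "sinv sv UNIV" and sinv_empty: "sinv sv {}"
  unfolding sinv_def by auto

lemma sinv_vorbset: "sinv sv {w. vorb sv w \<notin> Z}"
  unfolding sinv_def by (auto simp: vorb_sv)

lemma orbit_nonempty: "i \<in> Iset sv \<Longrightarrow> 1 \<le> card i"
  unfolding Iset_def using vorb_self by (auto simp: Suc_le_eq card_gt_0_iff)

lemma vorb_in_Iset: "vorb sv v \<in> Iset sv"
  unfolding Iset_def by auto

lemma finite_Iset: "finite (Iset sv)"
  by simp

end

context qs begin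

lemma path_short: assumes "pvalid src tgt v as" shows "length as < card (UNIV :: 'v set)"
proof (rule ccontr)
  assume "\<not> ?thesis"
  define f where "f k = pend tgt v (take k as)" for k
  have "\<not> inj_on f {0..length as}"
  proof
    assume "inj_on f {0..length as}"
    then have "card (f ` {0..length as}) = Suc (length as)" by (simp add: card_image)
    moreover have "card (f ` {0..length as}) \<le> card (UNIV :: 'v set)" by (rule card_mono) auto
    ultimately show False using \<open>\<not> length as < card (UNIV :: 'v set)\<close> by simp
  qed
  then obtain k k' where kk: "k \<in> {0..length as}" "k' \<in> {0..length as}" "k \<noteq> k'" "f k = f k'"
    unfolding inj_on_def by blast
  have main: "False" if "k < k'" "k' \<le> length as" "f k = f k'" for k k'
  proof -
    have split: "take k' as = take k as @ drop k (take k' as)"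
      using that by (metis append_take_drop_id min.absorb1 less_imp_le take_take)
    have "pvalid src tgt v (take k' as)"
      using assms by (metis append_take_drop_id pvalid_append)
    then have "pvalid src tgt (f k) (drop k (take k' as))"
      unfolding f_def by (metis split pvalid_append)
    moreover have "pend tgt (f k) (drop k (take k' as)) = f k'"
      unfolding f_def by (metis split pend_append)
    moreover have "drop k (take k' as) \<noteq> []" using that by simp
    ultimately show False using acyc that(3) unfolding quiver_acyclic_def by metis
  qed
  show False
  proof (cases "k < k'")
    case True then show ?thesis using main kk by auto
  next
    case False then have "k' < k" using kk by auto
    then show ?thesis using main[of k' k] kk by auto
  qed
qed

lemma maxorb_exists:
  assumes "Z \<noteq> {}" "Z \<subseteq> Iset sv"
  shows "\<exists>i\<in>Z. \<forall>v\<in>i. \<forall>as. pvalid src tgt v as \<and> as \<noteq> [] \<longrightarrow> vorb sv (pend tgt v as) \<notin> Z"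
proof -
  define L where "L = {length as | v as. pvalid src tgt v as \<and> vorb sv v \<in> Z \<and> vorb sv (pend tgt v as) \<in> Z}"
  obtain i0 where "i0 \<in> Z" using assms by auto
  then obtain v0 where "i0 = vorb sv v0" using assms unfolding Iset_def by auto
  then have "0 \<in> L" unfolding L_def using \<open>i0 \<in> Z\<close> by (auto intro!: exI[of _ "[]"] exI[of _ v0])
  have finL: "finite L"
    by (rule finite_subset[of _ "{..<card (UNIV :: 'v set)}"]) (auto simp: L_def dest: path_short)
  define m where "m = Max L"
  have "m \<in> L" unfolding m_def using finL \<open>0 \<in> L\<close> by (intro Max_in) auto
  then obtain v as where vas: "length as = m" "pvalid src tgt v as" "vorb sv v \<in> Z" "vorb sv (pend tgt v as) \<in> Z"
    unfolding L_def by auto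
  show ?thesis
  proof (intro bexI[of _ "vorb sv (pend tgt v as)"] ballI allI impI)
    fix w bs assume w: "w \<in> vorb sv (pend tgt v as)" and bs: "pvalid src tgt w bs \<and> bs \<noteq> []"
    show "vorb sv (pend tgt w bs) \<notin> Z"
    proof
      assume Zin: "vorb sv (pend tgt w bs) \<in> Z"
      obtain n where wn: "w = (sv ^^ n) (pend tgt v as)" using w unfolding vorb_def by auto
      define cs where "cs = map (se ^^ n) as @ bs"
      have "pvalid src tgt ((sv ^^ n) v) cs"
        unfolding cs_def pvalid_append using pvalid_map[OF vas(2)] pend_map bs wn by auto
      moreover have "pend tgt ((sv ^^ n) v) cs = pend tgt w bs"
        unfolding cs_def pend_append pend_map wn by simp
      moreover have "vorb sv ((sv ^^ n) v) \<in> Z" using vorb_iter vas by simp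
      ultimately have "length cs \<in> L" unfolding L_def using Zin by (metis (mono_tags, lifting) mem_Collect_eq)
      then have "length cs \<le> m" unfolding m_def using finL by simp
      moreover have "length cs > m" using bs vas unfolding cs_def by (cases bs) auto
      ultimately show False by simp
    qed
  qed (use vas in auto)
qed

lemma arrow_orbits: "vorb sv (src a) \<noteq> vorb sv (tgt a)"
proof
  assume eq: "vorb sv (src a) = vorb sv (tgt a)"
  then have "tgt a \<in> vorb sv (src a)" using vorb_self by simp
  then obtain n where n: "tgt a = (sv ^^ n) (src a)" unfolding vorb_def by auto
  define g where "g k = (se ^^ (k * n)) a" for k
  have gen: "pvalid src tgt ((sv ^^ (k * n)) (src a)) (map g [k..<k+m]) \<and>
     pend tgt ((sv ^^ (k * n)) (src a)) (map g [k..<k+m]) = (sv ^^ ((k + m) * n)) (src a)" for k m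
  proof (induction m arbitrary: k)
    case 0 then show ?case by simp
  next
    case (Suc m)
    have u: "[k..<k + Suc m] = k # [Suc k..<Suc k + m]" by (simp add: upt_conv_Cons)
    have t: "tgt (g k) = (sv ^^ (Suc k * n)) (src a)"
      unfolding g_def tgt_iter n by (simp add: funpow_add[symmetric, THEN fun_cong, simplified comp_def] add.commute)
    show ?case unfolding u using Suc[of "Suc k"] t by (simp add: g_def src_iter)
  qed
  from gen[of 0 N] have "pvalid src tgt (src a) (map g [0..<N])" "pend tgt (src a) (map g [0..<N]) = src a"
    using svN_mult[of n "src a"] by (auto simp: mult.commute)
  moreover have "map g [0..<N] \<noteq> []" using Npos by simp
  ultimately show False using acyc unfolding quiver_acyclic_def by blast
qed

end

lemma sum_single:
  assumes "finite S" "z \<in> S" "\<And>w. w \<in> S \<Longrightarrow> w \<noteq> z \<Longrightarrow> f w = 0"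
  shows "sum f S = f z"
proof -
  have "sum f S = f z + sum f (S - {z})" using assms by (simp add: sum.remove)
  also have "sum f (S - {z}) = 0" using assms by (intro sum.neutral) auto
  finally show ?thesis by simp
qed

context qs begin

lemma SP_finite: "finite {(r, s). r \<in> Paths src tgt \<and> s \<in> Paths src tgt \<and>
        pend tgt (fst s) (snd s) = fst r \<and> (fst s, snd s @ snd r) = p}"
proof (rule finite_subset)
  show "{(r, s). r \<in> Paths src tgt \<and> s \<in> Paths src tgt \<and>
        pend tgt (fst s) (snd s) = fst r \<and> (fst s, snd s @ snd r) = p} \<subseteq>
    (\<lambda>k. ((pend tgt (fst p) (take k (snd p)), drop k (snd p)), (fst p, take k (snd p)))) ` {..length (snd p)}"
  proof
    fix w assume h: "w \<in> {(r, s). r \<in> Paths src tgt \<and> s \<in> Paths src tgt \<and>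
        pend tgt (fst s) (snd s) = fst r \<and> (fst s, snd s @ snd r) = p}"
    obtain a b c d where w: "w = ((a, b), (c, d))" by (metis prod.exhaust)
    have "p = (c, d @ b)" "a = pend tgt c d" using h w by auto
    then show "w \<in> (\<lambda>k. ((pend tgt (fst p) (take k (snd p)), drop k (snd p)), (fst p, take k (snd p)))) ` {..length (snd p)}"
      unfolding w by (intro image_eqI[of _ _ "length d"]) auto
  qed
next
  show "finite ((\<lambda>k. ((pend tgt (fst p) (take k (snd p)), drop k (snd p)), (fst p, take k (snd p)))) ` {..length (snd p)})"
    by simp
qed

lemma triv_Paths: "(v, []) \<in> Paths src tgt"
  unfolding Paths_def by simp

lemma pa_mult_idem_right:
  fixes x :: "('v,'e) qpath \<Rightarrow> 'k::field"
  assumes "\<forall>p. p \<notin> Paths src tgt \<longrightarrow> x p = 0"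
  shows "pa_mult src tgt x (eidem T) = (\<lambda>p. if fst p \<in> T then x p else 0)"
proof
  fix p :: "('v, 'e) qpath"
  let ?S = "{(r, s). r \<in> Paths src tgt \<and> s \<in> Paths src tgt \<and>
        pend tgt (fst s) (snd s) = fst r \<and> (fst s, snd s @ snd r) = p}"
  let ?f = "\<lambda>(r, s). x r * (eidem T s :: 'k)"
  show "pa_mult src tgt x (eidem T) p = (if fst p \<in> T then x p else 0)"
  proof (cases "p \<in> Paths src tgt")
    case True
    have fin: "finite ?S" by (rule SP_finite)
    have mem: "(p, (fst p, [])) \<in> ?S" using True triv_Paths by (cases p) auto
    have zero: "?f w = 0" if "w \<in> ?S" "w \<noteq> (p, (fst p, []))" for w
      using that by (cases p; auto simp: eidem_def split: if_splits)
    from sum_single[OF fin mem zero] show ?thesis unfolding pa_mult_def by (auto simp: eidem_def)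
  next
    case False
    have "\<forall>w\<in>?S. ?f w = 0" using False by (cases p) (auto simp: eidem_def split: if_splits)
    then have "sum ?f ?S = 0" by (rule sum.neutral)
    then show ?thesis unfolding pa_mult_def using False assms[rule_format, of p] by auto
  qed
qed

lemma pa_mult_idem_left:
  fixes y :: "('v,'e) qpath \<Rightarrow> 'k::field"
  assumes "\<forall>p. p \<notin> Paths src tgt \<longrightarrow> y p = 0"
  shows "pa_mult src tgt (eidem S) y = (\<lambda>p. if pend tgt (fst p) (snd p) \<in> S then y p else 0)"
proof
  fix p :: "('v, 'e) qpath"
  let ?S = "{(r, s). r \<in> Paths src tgt \<and> s \<in> Paths src tgt \<and>
        pend tgt (fst s) (snd s) = fst r \<and> (fst s, snd s @ snd r) = p}"
  let ?f = "\<lambda>(r, s). (eidem S r :: 'k) * y s"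
  show "pa_mult src tgt (eidem S) y p = (if pend tgt (fst p) (snd p) \<in> S then y p else 0)"
  proof (cases "p \<in> Paths src tgt")
    case True
    have fin: "finite ?S" by (rule SP_finite)
    have mem: "((pend tgt (fst p) (snd p), []), p) \<in> ?S" using True triv_Paths by (cases p) auto
    have zero: "?f w = 0" if "w \<in> ?S" "w \<noteq> ((pend tgt (fst p) (snd p), []), p)" for w
      using that by (cases p; auto simp: eidem_def split: if_splits)
    from sum_single[OF fin mem zero] show ?thesis unfolding pa_mult_def by (auto simp: eidem_def)
  next
    case False
    have "\<forall>w\<in>?S. ?f w = 0" using False by (cases p) (auto simp: eidem_def split: if_splits)
    then have "sum ?f ?S = 0" by (rule sum.neutral)
    then show ?thesis unfolding pa_mult_def using False assms[rule_format, of p] by auto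
  qed
qed

lemma eidem_off: "\<forall>p. p \<notin> Paths src tgt \<longrightarrow> (eidem S p :: 'k::field) = 0"
  using triv_Paths by (auto simp: eidem_def)

lemma eidem_mult: "pa_mult src tgt (eidem S) (eidem T) = (eidem (S \<inter> T) :: _ \<Rightarrow> 'k::field)"
  unfolding pa_mult_idem_left[OF eidem_off] by (rule ext) (auto simp: eidem_def)

lemma eidem_add: "S \<inter> T = {} \<Longrightarrow> pa_add (eidem S) (eidem T) = (eidem (S \<union> T) :: _ \<Rightarrow> 'k::field)"
  by (rule ext) (auto simp: pa_add_def eidem_def)

lemma pa_one_eidem: "pa_one = eidem UNIV"
  by (rule ext) (auto simp: pa_one_def eidem_def)

lemma eidem_empty: "eidem {} = (\<lambda>p. 0)"
  by (rule ext) (auto simp: eidem_def)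

lemma eidem_Alg: "sinv sv S \<Longrightarrow> eidem S \<in> Alg src tgt sv se q"
  using q2 eidem_off unfolding Alg_def
  by (auto simp: eidem_def psig_def sinv_def power_0_left triv_Paths)

lemma Alg_off: "x \<in> Alg src tgt sv se q \<Longrightarrow> \<forall>p. p \<notin> Paths src tgt \<longrightarrow> x p = 0"
  unfolding Alg_def by auto

lemma mult_idem_right_Alg:
  assumes "x \<in> Alg src tgt sv se q" "sinv sv T"
  shows "pa_mult src tgt x (eidem T) \<in> Alg src tgt sv se q"
  using assms q2 unfolding pa_mult_idem_right[OF Alg_off[OF assms(1)]]
  by (auto simp: Alg_def psig_def sinv_def power_0_left)

lemma mult_idem_left_Alg:
  assumes "x \<in> Alg src tgt sv se q" "sinv sv T"
  shows "pa_mult src tgt (eidem T) x \<in> Alg src tgt sv se q"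
  using assms q2 unfolding pa_mult_idem_left[OF Alg_off[OF assms(1)]]
  by (auto simp: Alg_def psig_def sinv_def power_0_left pend_sig)

end

locale qmod = qs src tgt sv se q N
  for src tgt :: "'e::finite \<Rightarrow> 'v::finite" and sv se q N +
  fixes M :: "(('v,'e) qpath \<Rightarrow> 'k::field, 'm) amod"
  assumes ism: "is_amod src tgt sv se q M"
begin

abbreviation "AA \<equiv> Alg src tgt sv se q"
abbreviation "car \<equiv> mcar M"
abbreviation "ad \<equiv> madd M"
abbreviation "z \<equiv> mzero M"
abbreviation "sm \<equiv> msmult M"

lemma ax: "finite car \<and> z \<in> car \<and>
     (\<forall>x\<in>car. \<forall>y\<in>car. ad x y \<in> car) \<and>
     (\<forall>x\<in>car. \<forall>y\<in>car. \<forall>w\<in>car. ad (ad x y) w = ad x (ad y w)) \<and>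
     (\<forall>x\<in>car. \<forall>y\<in>car. ad x y = ad y x) \<and>
     (\<forall>x\<in>car. ad z x = x) \<and>
     (\<forall>x\<in>car. \<exists>y\<in>car. ad x y = z) \<and>
     (\<forall>a\<in>AA. \<forall>x\<in>car. sm a x \<in> car) \<and>
     (\<forall>a\<in>AA. \<forall>x\<in>car. \<forall>y\<in>car. sm a (ad x y) = ad (sm a x) (sm a y)) \<and>
     (\<forall>a\<in>AA. \<forall>b\<in>AA. \<forall>x\<in>car. sm (pa_add a b) x = ad (sm a x) (sm b x)) \<and>
     (\<forall>a\<in>AA. \<forall>b\<in>AA. \<forall>x\<in>car. sm (pa_mult src tgt a b) x = sm a (sm b x)) \<and>
     (\<forall>x\<in>car. sm pa_one x = x)"
  using ism unfolding is_amod_def Let_def by blast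

lemma fin: "finite car" by (rule ax[THEN conjunct1])
lemma zero_in[simp]: "z \<in> car" by (rule ax[THEN conjunct2, THEN conjunct1])
lemma add_closed[simp]: "x \<in> car \<Longrightarrow> y \<in> car \<Longrightarrow> ad x y \<in> car" by (rule ax[THEN conjunct2, THEN conjunct2, THEN conjunct1, rule_format])
lemma add_assoc: "x \<in> car \<Longrightarrow> y \<in> car \<Longrightarrow> w \<in> car \<Longrightarrow> ad (ad x y) w = ad x (ad y w)" by (rule ax[THEN conjunct2, THEN conjunct2, THEN conjunct2, THEN conjunct1, rule_format])
lemma add_comm: "x \<in> car \<Longrightarrow> y \<in> car \<Longrightarrow> ad x y = ad y x" by (rule ax[THEN conjunct2, THEN conjunct2, THEN conjunct2, THEN conjunct2, THEN conjunct1, rule_format])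
lemma zero_add[simp]: "x \<in> car \<Longrightarrow> ad z x = x" by (rule ax[THEN conjunct2, THEN conjunct2, THEN conjunct2, THEN conjunct2, THEN conjunct2, THEN conjunct1, rule_format])
lemma neg_ex: "x \<in> car \<Longrightarrow> \<exists>y\<in>car. ad x y = z" by (rule ax[THEN conjunct2, THEN conjunct2, THEN conjunct2, THEN conjunct2, THEN conjunct2, THEN conjunct2, THEN conjunct1, rule_format])
lemma sm_closed[simp]: "a \<in> AA \<Longrightarrow> x \<in> car \<Longrightarrow> sm a x \<in> car" by (rule ax[THEN conjunct2, THEN conjunct2, THEN conjunct2, THEN conjunct2, THEN conjunct2, THEN conjunct2, THEN conjunct2, THEN conjunct1, rule_format])
lemma sm_add: "a \<in> AA \<Longrightarrow> x \<in> car \<Longrightarrow> y \<in> car \<Longrightarrow> sm a (ad x y) = ad (sm a x) (sm a y)" by (rule ax[THEN conjunct2, THEN conjunct2, THEN conjunct2, THEN conjunct2, THEN conjunct2, THEN conjunct2, THEN conjunct2, THEN conjunct2, THEN conjunct1, rule_format])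
lemma sm_padd: "a \<in> AA \<Longrightarrow> b \<in> AA \<Longrightarrow> x \<in> car \<Longrightarrow> sm (pa_add a b) x = ad (sm a x) (sm b x)" by (rule ax[THEN conjunct2, THEN conjunct2, THEN conjunct2, THEN conjunct2, THEN conjunct2, THEN conjunct2, THEN conjunct2, THEN conjunct2, THEN conjunct2, THEN conjunct1, rule_format])
lemma sm_mult: "a \<in> AA \<Longrightarrow> b \<in> AA \<Longrightarrow> x \<in> car \<Longrightarrow> sm (pa_mult src tgt a b) x = sm a (sm b x)" by (rule ax[THEN conjunct2, THEN conjunct2, THEN conjunct2, THEN conjunct2, THEN conjunct2, THEN conjunct2, THEN conjunct2, THEN conjunct2, THEN conjunct2, THEN conjunct2, THEN conjunct1, rule_format])
lemma sm_one: "x \<in> car \<Longrightarrow> sm pa_one x = x" by (rule ax[THEN conjunct2, THEN conjunct2, THEN conjunct2, THEN conjunct2, THEN conjunct2, THEN conjunct2, THEN conjunct2, THEN conjunct2, THEN conjunct2, THEN conjunct2, THEN conjunct2, rule_format])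

lemma add_zero[simp]: "x \<in> car \<Longrightarrow> ad x z = x"
  using add_comm zero_add by simp

lemma cancel_left: assumes "x \<in> car" "y \<in> car" "w \<in> car" "ad x y = ad x w" shows "y = w"
proof -
  obtain n where n: "n \<in> car" "ad x n = z" using neg_ex assms by blast
  have "ad n (ad x y) = ad n (ad x w)" using assms by simp
  then have "ad (ad n x) y = ad (ad n x) w" using assms n add_assoc by simp
  moreover have "ad n x = z" using n assms add_comm by simp
  ultimately show ?thesis using assms by simp
qed

lemma zero_unique: assumes "x \<in> car" "ad x x = x" shows "x = z"
  using cancel_left[of x x z] assms by simp

lemma sm_zero[simp]: "a \<in> AA \<Longrightarrow> sm a z = z"
  using zero_unique[of "sm a z"] sm_add[of a z z] by simp

lemma E_Alg: "sinv sv S \<Longrightarrow> (eidem S :: _ \<Rightarrow> 'k) \<in> AA"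
  by (rule eidem_Alg)

abbreviation "E S \<equiv> (eidem S :: ('v,'e) qpath \<Rightarrow> 'k)"

lemma E_add: "S \<inter> T = {} \<Longrightarrow> pa_add (E S) (E T) = E (S \<union> T)"
  by (rule eidem_add)
lemma E_mult: "pa_mult src tgt (E S) (E T) = E (S \<inter> T)"
  by (rule eidem_mult)
lemma E_one: "(pa_one :: ('v,'e) qpath \<Rightarrow> 'k) = E UNIV"
  by (rule pa_one_eidem)

lemma E_closed[simp]: "sinv sv S \<Longrightarrow> x \<in> car \<Longrightarrow> sm (E S) x \<in> car"
  using E_Alg by simp

lemma E_E: "sinv sv S \<Longrightarrow> sinv sv T \<Longrightarrow> x \<in> car \<Longrightarrow> sm (E S) (sm (E T) x) = sm (E (S \<inter> T)) x"
  using sm_mult[of "E S" "E T" x] E_Alg E_mult by metis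

lemma E_idem[simp]: "sinv sv S \<Longrightarrow> x \<in> car \<Longrightarrow> sm (E S) (sm (E S) x) = sm (E S) x"
  using E_E by simp

lemma E_empty: "x \<in> car \<Longrightarrow> sm (E {}) x = z"
proof -
  assume x: "x \<in> car"
  have "pa_add (E {}) (E {}) = E {}" using E_add[of "{}" "{}"] by simp
  then have "sm (E {}) x = ad (sm (E {}) x) (sm (E {}) x)"
    using sm_padd[of "E {}" "E {}" x] E_Alg[OF sinv_empty] x by simp
  then show ?thesis using zero_unique x E_Alg[OF sinv_empty] by simp
qed

lemma E_disj: "sinv sv S \<Longrightarrow> sinv sv T \<Longrightarrow> S \<inter> T = {} \<Longrightarrow> x \<in> car \<Longrightarrow> sm (E S) (sm (E T) x) = z"
  using E_E E_empty by simp

lemma E_split: "sinv sv S \<Longrightarrow> x \<in> car \<Longrightarrow> x = ad (sm (E S) x) (sm (E (- S)) x)"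
proof -
  assume S: "sinv sv S" and x: "x \<in> car"
  have "pa_add (E S) (E (- S)) = pa_one" using E_add[of S "- S"] E_one by simp
  then show ?thesis using sm_padd[of "E S" "E (- S)" x] E_Alg S sinv_Compl x sm_one by metis
qed

lemma E_UNIV: "x \<in> car \<Longrightarrow> sm (E UNIV) x = x"
  using sm_one E_one by metis

definition kills :: "(('v,'e) qpath \<Rightarrow> 'k) \<Rightarrow> bool" where
  "kills a \<longleftrightarrow> (\<forall>x\<in>car. sm a x = z)"

lemma E_Union_kills:
  assumes "finite J" "J \<subseteq> Iset sv" "\<forall>j\<in>J. kills (E j)"
  shows "kills (E (\<Union>J))"
  using assms
proof (induction J rule: finite_induct)
  case empty then show ?case using E_empty by (simp add: kills_def)
next
  case (insert j J)
  have j: "j \<in> Iset sv" and JI: "J \<subseteq> Iset sv" using insert by auto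
  have disj: "j \<inter> \<Union>J = {}" using orbit_disj[OF j] JI insert(2) by blast
  have sj: "sinv sv j" using orbit_sinv[OF j] .
  have sJ: "sinv sv (\<Union>J)" using sinv_Union orbit_sinv JI by blast
  have eq: "E (\<Union>(insert j J)) = pa_add (E j) (E (\<Union>J))" using E_add[OF disj] by simp
  show ?case unfolding kills_def eq
  proof
    fix x assume "x \<in> car"
    then show "sm (pa_add (E j) (E (\<Union> J))) x = z"
      using sm_padd[of "E j" "E (\<Union>J)" x] E_Alg sj sJ insert kills_def by auto
  qed
qed

definition nz :: "'v set set" where
  "nz = {j \<in> Iset sv. \<not> kills (E j)}"

end

context qmod begin

lemma add_swap: "x \<in> car \<Longrightarrow> y \<in> car \<Longrightarrow> s \<in> car \<Longrightarrow> t \<in> car \<Longrightarrow>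
   ad (ad x s) (ad y t) = ad (ad x y) (ad s t)"
proof -
  assume h: "x \<in> car" "y \<in> car" "s \<in> car" "t \<in> car"
  have "ad (ad x s) (ad y t) = ad x (ad s (ad y t))" using h by (simp add: add_assoc)
  also have "ad s (ad y t) = ad (ad s y) t" using h by (simp add: add_assoc)
  also have "ad s y = ad y s" using h by (simp add: add_comm)
  also have "ad (ad y s) t = ad y (ad s t)" using h by (simp add: add_assoc)
  also have "ad x (ad y (ad s t)) = ad (ad x y) (ad s t)" using h by (simp add: add_assoc)
  finally show ?thesis .
qed

lemma neg_cancel: "x \<in> car \<Longrightarrow> n \<in> car \<Longrightarrow> ad x n = z \<Longrightarrow> y \<in> car \<Longrightarrow> ad x (ad n y) = y"
proof -
  assume h: "x \<in> car" "n \<in> car" "ad x n = z" "y \<in> car"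
  have "ad x (ad n y) = ad (ad x n) y" using add_assoc[OF h(1,2,4)] by simp
  also have "\<dots> = y" using h by simp
  finally show ?thesis .
qed

lemma submodD: assumes "submod AA M S"
  shows "S \<subseteq> car" "z \<in> S" "\<And>x y. x \<in> S \<Longrightarrow> y \<in> S \<Longrightarrow> ad x y \<in> S"
    "\<And>x. x \<in> S \<Longrightarrow> \<exists>y\<in>S. ad x y = z" "\<And>a x. a \<in> AA \<Longrightarrow> x \<in> S \<Longrightarrow> sm a x \<in> S"
  using assms unfolding submod_def by auto

lemma sub_is_amod: assumes "submod AA M S" shows "is_amod src tgt sv se q (M\<lparr>mcar := S\<rparr>)"
proof -
  note d = submodD[OF assms]
  have "finite S" using d(1) fin finite_subset by blast
  then show ?thesis unfolding is_amod_def Let_def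
    using d sm_add sm_padd sm_mult sm_one add_assoc add_comm subsetD[OF d(1)]
    by simp
qed

lemma coset_self: "x \<in> car \<Longrightarrow> submod AA M S \<Longrightarrow> x \<in> mcoset M S x"
  unfolding mcoset_def using submodD by (metis add_zero image_eqI)

lemma coset_sub: "x \<in> car \<Longrightarrow> submod AA M S \<Longrightarrow> mcoset M S x \<subseteq> car"
  unfolding mcoset_def using submodD(1) by (auto intro!: add_closed)

lemma coset_eq:
  assumes S: "submod AA M S" and xy: "x \<in> car" "y \<in> car" and s: "s \<in> S" and e: "x = ad y s"
  shows "mcoset M S x = mcoset M S y"
proof
  note d = submodD[OF S]
  have sc: "s \<in> car" using d s by auto
  show "mcoset M S x \<subseteq> mcoset M S y"
  proof
    fix c assume "c \<in> mcoset M S x"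
    then obtain t where t: "t \<in> S" "c = ad x t" unfolding mcoset_def by auto
    then have "c = ad y (ad s t)" using e add_assoc xy sc d by auto
    moreover have "ad s t \<in> S" using d s t by auto
    ultimately show "c \<in> mcoset M S y" unfolding mcoset_def by auto
  qed
  show "mcoset M S y \<subseteq> mcoset M S x"
  proof
    fix c assume "c \<in> mcoset M S y"
    then obtain t where t: "t \<in> S" "c = ad y t" unfolding mcoset_def by auto
    obtain n where n: "n \<in> S" "ad s n = z" using d s by blast
    have tc: "t \<in> car" "n \<in> car" using d t n by auto
    have "ad x (ad n t) = ad y (ad s (ad n t))" using e add_assoc xy sc tc by simp
    also have "\<dots> = ad y t" using neg_cancel[OF sc tc(2) n(2) tc(1)] by simp
    finally have "c = ad x (ad n t)" using t by simp
    moreover have "ad n t \<in> S" using d n t by auto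
    ultimately show "c \<in> mcoset M S x" unfolding mcoset_def by auto
  qed
qed

lemma coset_elem: "c \<in> mcoset M S x \<Longrightarrow> \<exists>s\<in>S. c = ad x s"
  unfolding mcoset_def by auto

lemma coset_zero: "submod AA M S \<Longrightarrow> mcoset M S z = S"
  unfolding mcoset_def using submodD by (auto simp: subset_iff)

lemma coset_S_iff: assumes S: "submod AA M S" and x: "x \<in> car"
  shows "mcoset M S x = S \<longleftrightarrow> x \<in> S"
proof
  assume "mcoset M S x = S" then show "x \<in> S" using coset_self[OF x S] by simp
next
  assume "x \<in> S"
  then have "mcoset M S x = mcoset M S z" using coset_eq[OF S x zero_in, of x] x by simp
  then show "mcoset M S x = S" using coset_zero[OF S] by simp
qed

lemma rep_props: assumes S: "submod AA M S" and x: "x \<in> car"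
  shows "(SOME c. c \<in> mcoset M S x) \<in> mcoset M S x"
    "\<exists>s\<in>S. (SOME c. c \<in> mcoset M S x) = ad x s"
    "(SOME c. c \<in> mcoset M S x) \<in> car"
proof -
  show 1: "(SOME c. c \<in> mcoset M S x) \<in> mcoset M S x" using coset_self[OF x S] by (rule someI)
  then show "\<exists>s\<in>S. (SOME c. c \<in> mcoset M S x) = ad x s" by (rule coset_elem)
  show "(SOME c. c \<in> mcoset M S x) \<in> car" using 1 coset_sub[OF x S] by auto
qed

lemma quot_add: assumes S: "submod AA M S" and x: "x \<in> car" and y: "y \<in> car"
  shows "madd (quotmod M S) (mcoset M S x) (mcoset M S y) = mcoset M S (ad x y)"
proof -
  note d = submodD[OF S]
  obtain s where s: "s \<in> S" "(SOME c. c \<in> mcoset M S x) = ad x s" using rep_props[OF S x] by blast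
  obtain t where t: "t \<in> S" "(SOME c. c \<in> mcoset M S y) = ad y t" using rep_props[OF S y] by blast
  have sc: "s \<in> car" "t \<in> car" using d s t by auto
  have "ad (ad x s) (ad y t) = ad (ad x y) (ad s t)" using add_swap x y sc by simp
  then show ?thesis unfolding quotmod_def using s t
    by simp (rule coset_eq[OF S], use x y sc d s t in auto)
qed

lemma quot_sm: assumes S: "submod AA M S" and x: "x \<in> car" and a: "a \<in> AA"
  shows "msmult (quotmod M S) a (mcoset M S x) = mcoset M S (sm a x)"
proof -
  note d = submodD[OF S]
  obtain s where s: "s \<in> S" "(SOME c. c \<in> mcoset M S x) = ad x s" using rep_props[OF S x] by blast
  have sc: "s \<in> car" using d s by auto
  have "sm a (ad x s) = ad (sm a x) (sm a s)" using sm_add a x sc by simp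
  then show ?thesis unfolding quotmod_def using s
    by simp (rule coset_eq[OF S], use x a sc d s in auto)
qed

lemma quot_car: "mcar (quotmod M S) = mcoset M S ` car"
  unfolding quotmod_def by simp

lemma quot_zero: "submod AA M S \<Longrightarrow> mzero (quotmod M S) = S"
  unfolding quotmod_def using coset_zero by simp

lemma quot_pre: assumes S: "submod AA M S"
  shows "mzero (quotmod M S) \<in> mcar (quotmod M S)"
    "madd (quotmod M S) (mzero (quotmod M S)) (mzero (quotmod M S)) = mzero (quotmod M S)"
    "\<And>C D. C \<in> mcar (quotmod M S) \<Longrightarrow> D \<in> mcar (quotmod M S) \<Longrightarrow> madd (quotmod M S) C D \<in> mcar (quotmod M S)"
    "\<And>a C. a \<in> AA \<Longrightarrow> C \<in> mcar (quotmod M S) \<Longrightarrow> msmult (quotmod M S) a C \<in> mcar (quotmod M S)"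
proof -
  show "mzero (quotmod M S) \<in> mcar (quotmod M S)" unfolding quotmod_def by simp
  show "madd (quotmod M S) (mzero (quotmod M S)) (mzero (quotmod M S)) = mzero (quotmod M S)"
  proof -
    have "mzero (quotmod M S) = mcoset M S z" by (simp add: quotmod_def)
    then show ?thesis using quot_add[OF S zero_in zero_in] by simp
  qed
  show "\<And>C D. C \<in> mcar (quotmod M S) \<Longrightarrow> D \<in> mcar (quotmod M S) \<Longrightarrow> madd (quotmod M S) C D \<in> mcar (quotmod M S)"
    unfolding quot_car using quot_add[OF S] by auto
  show "\<And>a C. a \<in> AA \<Longrightarrow> C \<in> mcar (quotmod M S) \<Longrightarrow> msmult (quotmod M S) a C \<in> mcar (quotmod M S)"
    unfolding quot_car using quot_sm[OF S] by auto
qed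

lemma quot_kills_iff: assumes S: "submod AA M S" and a: "a \<in> AA"
  shows "(\<forall>C\<in>mcar (quotmod M S). msmult (quotmod M S) a C = mzero (quotmod M S)) \<longleftrightarrow> (\<forall>x\<in>car. sm a x \<in> S)"
  unfolding quot_car quot_zero[OF S] using quot_sm[OF S _ a] coset_S_iff[OF S] a by auto

lemma kills_split: assumes S: "submod AA M S" and j: "sinv sv j"
  shows "kills (E j) \<longleftrightarrow> (\<forall>x\<in>S. sm (E j) x = z) \<and> (\<forall>x\<in>car. sm (E j) x \<in> S)"
proof
  note d = submodD[OF S]
  assume "kills (E j)" then show "(\<forall>x\<in>S. sm (E j) x = z) \<and> (\<forall>x\<in>car. sm (E j) x \<in> S)"
    unfolding kills_def using d by auto
next
  note d = submodD[OF S]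
  assume h: "(\<forall>x\<in>S. sm (E j) x = z) \<and> (\<forall>x\<in>car. sm (E j) x \<in> S)"
  show "kills (E j)" unfolding kills_def
  proof
    fix x assume x: "x \<in> car"
    have "sm (E j) x = sm (E j) (sm (E j) x)" using E_idem j x by simp
    also have "\<dots> = z" using h x by auto
    finally show "sm (E j) x = z" .
  qed
qed

end

definition Qmod :: "('r, 'm) amod \<Rightarrow> 'r \<Rightarrow> ('r, 'm) amod" where
  "Qmod M f = \<lparr> mcar = msmult M f ` mcar M, madd = madd M, mzero = mzero M,
      msmult = (\<lambda>a x. msmult M f (msmult M a x)) \<rparr>"

context qmod begin

definition sinkorb :: "'v set \<Rightarrow> bool" where
  "sinkorb i \<longleftrightarrow> i \<in> Iset sv \<and> (\<forall>v\<in>i. \<forall>as. pvalid src tgt v as \<and> as \<noteq> [] \<longrightarrow> vorb sv (pend tgt v as) \<notin> nz)"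

lemma nz_sub: "nz \<subseteq> Iset sv" unfolding nz_def by auto

lemma sinkorb_exists: "nz \<noteq> {} \<Longrightarrow> \<exists>i\<in>nz. sinkorb i"
  using maxorb_exists[OF _ nz_sub] nz_sub unfolding sinkorb_def by blast

lemma kills_U: "kills (E {w. vorb sv w \<notin> nz})"
proof -
  have eq: "{w. vorb sv w \<notin> nz} = \<Union>(Iset sv - nz)"
  proof
    show "{w. vorb sv w \<notin> nz} \<subseteq> \<Union>(Iset sv - nz)" using vorb_self vorb_in_Iset by blast
    show "\<Union>(Iset sv - nz) \<subseteq> {w. vorb sv w \<notin> nz}"
      unfolding Iset_def using vorb_mem by auto
  qed
  show ?thesis unfolding eq
    by (rule E_Union_kills) (auto simp: nz_def)
qed

lemma sink_core:
  assumes i: "sinkorb i" and a: "a \<in> AA" and m: "m \<in> car"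
  shows "sm (E (- i)) (sm a (sm (E i) m)) = z"
proof -
  have si: "sinv sv i" using i orbit_sinv unfolding sinkorb_def by auto
  have sci: "sinv sv (- i)" using sinv_Compl[OF si] .
  let ?U = "{w. vorb sv w \<notin> nz}"
  have sU: "sinv sv ?U" by (rule sinv_vorbset)
  define c where "c = pa_mult src tgt (E (- i)) (pa_mult src tgt a (E i))"
  have ai: "pa_mult src tgt a (E i) \<in> AA" using mult_idem_right_Alg[OF a si] .
  have cA: "c \<in> AA" unfolding c_def using mult_idem_left_Alg[OF ai sci] .
  have "sm (E (- i)) (sm a (sm (E i) m)) = sm c m"
    unfolding c_def using sm_mult ai a E_Alg si sci m by simp
  have cval: "c = (\<lambda>p. if pend tgt (fst p) (snd p) \<in> - i then (if fst p \<in> i then a p else 0) else 0)"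
    unfolding c_def pa_mult_idem_left[OF Alg_off[OF ai]] unfolding pa_mult_idem_right[OF Alg_off[OF a]] by simp
  have "c = pa_mult src tgt (E ?U) c"
  proof -
    have "c p = (if pend tgt (fst p) (snd p) \<in> ?U then c p else 0)" for p
    proof (cases "c p = 0")
      case False
      then have cp: "pend tgt (fst p) (snd p) \<notin> i" "fst p \<in> i" "a p \<noteq> 0"
        unfolding cval by (auto split: if_splits)
      have "p \<in> Paths src tgt" using Alg_off[OF a, rule_format, of p] cp(3) by auto
      then have pv: "pvalid src tgt (fst p) (snd p)" unfolding Paths_def by auto
      have "snd p \<noteq> []" using cp by auto
      then have "vorb sv (pend tgt (fst p) (snd p)) \<notin> nz" using i cp pv unfolding sinkorb_def by blast
      then show ?thesis by simp
    qed simp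
    then show ?thesis unfolding pa_mult_idem_left[OF Alg_off[OF cA]] by (rule ext)
  qed
  then have "sm c m = sm (E ?U) (sm c m)" using sm_mult[OF E_Alg[OF sU] cA m] by simp
  also have "\<dots> = z" using kills_U cA m unfolding kills_def by simp
  finally show ?thesis using \<open>sm (E (- i)) (sm a (sm (E i) m)) = sm c m\<close> by simp
qed

lemma proj_lemma:
  assumes i: "sinkorb i" and a: "a \<in> AA" and x: "x \<in> car"
  shows "sm (E (- i)) (sm a x) = sm (E (- i)) (sm a (sm (E (- i)) x))"
proof -
  have si: "sinv sv i" using i orbit_sinv unfolding sinkorb_def by auto
  have sci: "sinv sv (- i)" using sinv_Compl[OF si] .
  have "sm (E (- i)) (sm a x) = sm (E (- i)) (sm a (ad (sm (E i) x) (sm (E (- i)) x)))"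
    using E_split[OF si x] by simp
  also have "\<dots> = ad (sm (E (- i)) (sm a (sm (E i) x))) (sm (E (- i)) (sm a (sm (E (- i)) x)))"
    using sm_add a x si sci E_Alg by simp
  also have "\<dots> = sm (E (- i)) (sm a (sm (E (- i)) x))"
    using sink_core[OF i a x] a x sci by simp
  finally show ?thesis .
qed

abbreviation "Si i \<equiv> sm (E i) ` car"

lemma Si_sub: assumes i: "sinkorb i" shows "submod AA M (Si i)"
proof -
  have si: "sinv sv i" using i orbit_sinv unfolding sinkorb_def by auto
  have sci: "sinv sv (- i)" using sinv_Compl[OF si] .
  show ?thesis unfolding submod_def
  proof (intro conjI ballI)
    show "Si i \<subseteq> car" using si by auto
    have "sm (E i) z = z" using E_Alg[OF si] by simp
    then show "z \<in> Si i" by (metis image_eqI zero_in)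
    fix x y assume "x \<in> Si i" "y \<in> Si i"
    then obtain m n where "m \<in> car" "n \<in> car" "x = sm (E i) m" "y = sm (E i) n" by auto
    then show "ad x y \<in> Si i" using sm_add E_Alg si by (auto intro!: image_eqI[of _ _ "ad m n"])
  next
    fix x assume "x \<in> Si i"
    then obtain m where m: "m \<in> car" "x = sm (E i) m" by auto
    obtain n where n: "n \<in> car" "ad m n = z" using neg_ex m by blast
    have "ad x (sm (E i) n) = z" using sm_add[of "E i" m n] E_Alg si m n by simp
    then show "\<exists>y\<in>Si i. ad x y = z" using n by auto
  next
    fix a :: "('v,'e) qpath \<Rightarrow> 'k" and x assume a: "a \<in> AA" and "x \<in> Si i"
    then obtain m where m: "m \<in> car" "x = sm (E i) m" by auto
    have ax: "sm a x \<in> car" using a m si by simp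
    have ez: "sm (E (- i)) (sm a x) = z" using sink_core[OF i a m(1)] m by simp
    have "sm a x = ad (sm (E i) (sm a x)) (sm (E (- i)) (sm a x))" using E_split[OF si ax] .
    also have "\<dots> = sm (E i) (sm a x)" unfolding ez by (rule add_zero) (simp add: si ax)
    finally have eq: "sm a x = sm (E i) (sm a x)" .
    then show "sm a x \<in> Si i" using ax by (metis imageI)
  qed
qed

lemma Qmod_amod: assumes i: "sinkorb i" shows "is_amod src tgt sv se q (Qmod M (E (- i)))"
proof -
  have si: "sinv sv i" using i orbit_sinv unfolding sinkorb_def by auto
  have sci: "sinv sv (- i)" using sinv_Compl[OF si] .
  let ?f = "E (- i)"
  have fin': "finite (sm ?f ` car)" using fin by simp
  have cl: "x \<in> sm ?f ` car \<Longrightarrow> x \<in> car" for x using sci by auto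
  have inv: "\<exists>y\<in>sm ?f ` car. ad x y = z" if xin: "x \<in> sm ?f ` car" for x
  proof -
    obtain m where m: "m \<in> car" "x = sm ?f m" using xin by blast
    obtain n where n: "n \<in> car" "ad m n = z" using neg_ex m by blast
    have "ad x (sm ?f n) = z" using sm_add[of ?f m n] E_Alg sci m n by simp
    then show ?thesis using n by auto
  qed
  have pm: "sm ?f (sm (pa_mult src tgt a b) x) = sm ?f (sm a (sm ?f (sm b x)))"
    if "a \<in> AA" "b \<in> AA" "x \<in> car" for a b x
    using sm_mult that proj_lemma[OF i, of a "sm b x"] by simp
  have po: "sm ?f (sm pa_one x) = x" if "x \<in> sm ?f ` car" for x
    using that sm_one sci by auto
  let ?C = "sm ?f ` car"
  have fA: "?f \<in> AA" using E_Alg[OF sci] .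
  have h2: "z \<in> ?C" using sm_zero[OF fA] by (metis image_eqI zero_in)
  have h3: "\<forall>x\<in>?C. \<forall>y\<in>?C. ad x y \<in> ?C"
  proof (intro ballI)
    fix x y assume "x \<in> ?C" "y \<in> ?C"
    then obtain m n where mn: "m \<in> car" "n \<in> car" "x = sm ?f m" "y = sm ?f n" by blast
    then have "ad x y = sm ?f (ad m n)" using sm_add[OF fA] by simp
    then show "ad x y \<in> ?C" using mn by (metis add_closed imageI)
  qed
  have h4: "\<forall>x\<in>?C. \<forall>y\<in>?C. \<forall>w\<in>?C. ad (ad x y) w = ad x (ad y w)" using cl add_assoc by simp
  have h5: "\<forall>x\<in>?C. \<forall>y\<in>?C. ad x y = ad y x" using cl add_comm by simp
  have h6: "\<forall>x\<in>?C. ad z x = x" using cl by simp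
  have h7: "\<forall>x\<in>?C. \<exists>y\<in>?C. ad x y = z" using inv by blast
  have h8: "\<forall>a\<in>AA. \<forall>x\<in>?C. sm ?f (sm a x) \<in> ?C" using cl by simp
  have h9: "\<forall>a\<in>AA. \<forall>x\<in>?C. \<forall>y\<in>?C. sm ?f (sm a (ad x y)) = ad (sm ?f (sm a x)) (sm ?f (sm a y))"
    using cl sm_add fA by simp
  have h10: "\<forall>a\<in>AA. \<forall>b\<in>AA. \<forall>x\<in>?C. sm ?f (sm (pa_add a b) x) = ad (sm ?f (sm a x)) (sm ?f (sm b x))"
    using cl sm_add sm_padd fA by simp
  have h11: "\<forall>a\<in>AA. \<forall>b\<in>AA. \<forall>x\<in>?C. sm ?f (sm (pa_mult src tgt a b) x) = sm ?f (sm a (sm ?f (sm b x)))"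
    using cl pm by simp
  have h12: "\<forall>x\<in>?C. sm ?f (sm pa_one x) = x" using po by simp
  show ?thesis unfolding is_amod_def Let_def Qmod_def amod.simps
    by (intro conjI) (fact fin' h2 h3 h4 h5 h6 h7 h8 h9 h10 h11 h12)+
qed

end

lemma iso_id: "amod_iso A M M (\<lambda>x. x)"
  unfolding amod_iso_def by (simp add: bij_betw_def)

lemma iso_trans: assumes f: "amod_iso A M N f" and g: "amod_iso A N P g" shows "amod_iso A M P (g \<circ> f)"
proof -
  have bf: "bij_betw f (mcar M) (mcar N)" and bg: "bij_betw g (mcar N) (mcar P)"
    using f g unfolding amod_iso_def by auto
  show ?thesis unfolding amod_iso_def
  proof (intro conjI ballI)
    show "bij_betw (g \<circ> f) (mcar M) (mcar P)" using bij_betw_trans[OF bf bg] .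
    fix x y assume x: "x \<in> mcar M" and y: "y \<in> mcar M"
    have "f x \<in> mcar N" "f y \<in> mcar N" using bij_betwE[OF bf] x y by auto
    then show "(g \<circ> f) (madd M x y) = madd P ((g \<circ> f) x) ((g \<circ> f) y)"
      using f g x y unfolding amod_iso_def by simp
  next
    fix a x assume a: "a \<in> A" and x: "x \<in> mcar M"
    have "f x \<in> mcar N" using bij_betwE[OF bf] x by auto
    then show "(g \<circ> f) (msmult M a x) = msmult P a ((g \<circ> f) x)"
      using f g x a unfolding amod_iso_def by simp
  qed
qed

lemma iso_sym:
  assumes f: "amod_iso A M N f"
    and addc: "\<And>x y. x \<in> mcar M \<Longrightarrow> y \<in> mcar M \<Longrightarrow> madd M x y \<in> mcar M"
    and smc: "\<And>a x. a \<in> A \<Longrightarrow> x \<in> mcar M \<Longrightarrow> msmult M a x \<in> mcar M"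
  shows "amod_iso A N M (inv_into (mcar M) f)"
proof -
  have b: "bij_betw f (mcar M) (mcar N)" using f unfolding amod_iso_def by auto
  have b': "bij_betw (inv_into (mcar M) f) (mcar N) (mcar M)" using bij_betw_inv_into[OF b] .
  have ii: "inv_into (mcar M) f (f x) = x" if "x \<in> mcar M" for x
    using b that by (simp add: bij_betw_def)
  have fi: "f (inv_into (mcar M) f y) = y" if "y \<in> mcar N" for y
    using b that by (simp add: bij_betw_def f_inv_into_f)
  have im: "inv_into (mcar M) f y \<in> mcar M" if "y \<in> mcar N" for y
    using bij_betwE[OF b'] that by blast
  show ?thesis unfolding amod_iso_def
  proof (intro conjI ballI b')
    fix x y assume x: "x \<in> mcar N" and y: "y \<in> mcar N"
    have "madd N x y = f (madd M (inv_into (mcar M) f x) (inv_into (mcar M) f y))"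
      using f im x y fi unfolding amod_iso_def by simp
    then show "inv_into (mcar M) f (madd N x y) = madd M (inv_into (mcar M) f x) (inv_into (mcar M) f y)"
      using ii addc im x y by simp
  next
    fix a x assume a: "a \<in> A" and x: "x \<in> mcar N"
    have "msmult N a x = f (msmult M a (inv_into (mcar M) f x))"
      using f im x fi a unfolding amod_iso_def by simp
    then show "inv_into (mcar M) f (msmult N a x) = msmult M a (inv_into (mcar M) f x)"
      using ii smc im x a by simp
  qed
qed

lemma iso_card: "amod_iso A M N f \<Longrightarrow> card (mcar M) = card (mcar N)"
  unfolding amod_iso_def using bij_betw_same_card by blast

context qs begin

lemma qmodI: "is_amod src tgt sv se q M \<Longrightarrow> qmod src tgt sv se q N M"
  using qs_axioms by (simp add: qmod_def qmod_axioms_def)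

lemma iso_zero:
  assumes f: "amod_iso A M M' f" and z: "mzero M \<in> mcar M" "madd M (mzero M) (mzero M) = mzero M"
    and M': "is_amod src tgt sv se q M'"
  shows "f (mzero M) = mzero M'"
proof -
  interpret m': qmod src tgt sv se q N M' by (rule qmodI[OF M'])
  have "f (mzero M) \<in> mcar M'" using f z unfolding amod_iso_def bij_betw_def by auto
  moreover have "madd M' (f (mzero M)) (f (mzero M)) = f (mzero M)"
    using f z unfolding amod_iso_def by metis
  ultimately show ?thesis using m'.zero_unique by simp
qed

lemma iso_kills:
  assumes f: "amod_iso A M M' f" and fz: "f (mzero M) = mzero M'" and zM: "mzero M \<in> mcar M"
    and a: "a \<in> A" and cl: "\<And>x. x \<in> mcar M \<Longrightarrow> msmult M a x \<in> mcar M"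
  shows "(\<forall>x\<in>mcar M. msmult M a x = mzero M) \<longleftrightarrow> (\<forall>y\<in>mcar M'. msmult M' a y = mzero M')"
proof
  have b: "bij_betw f (mcar M) (mcar M')" and h: "\<forall>x\<in>mcar M. f (msmult M a x) = msmult M' a (f x)"
    using f a unfolding amod_iso_def by auto
  {
    assume k: "\<forall>x\<in>mcar M. msmult M a x = mzero M"
    show "\<forall>y\<in>mcar M'. msmult M' a y = mzero M'"
    proof
      fix y assume "y \<in> mcar M'"
      then obtain x where "x \<in> mcar M" "y = f x" using b unfolding bij_betw_def by auto
      then show "msmult M' a y = mzero M'" using h k fz by metis
    qed
  }
  {
    assume k: "\<forall>y\<in>mcar M'. msmult M' a y = mzero M'"
    show "\<forall>x\<in>mcar M. msmult M a x = mzero M"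
    proof
      fix x assume x: "x \<in> mcar M"
      have "f x \<in> mcar M'" using b x unfolding bij_betw_def by auto
      then have "f (msmult M a x) = f (mzero M)" using h k fz x by simp
      then show "msmult M a x = mzero M" using b cl x zM unfolding bij_betw_def inj_on_def by blast
    qed
  }
qed

end

context qmod begin

lemma quot_Q_iso:
  assumes i: "sinkorb i"
  shows "amod_iso AA (quotmod M (Si i)) (Qmod M (E (- i))) (\<lambda>C. sm (E (- i)) (SOME c. c \<in> C))"
proof -
  have si: "sinv sv i" using i orbit_sinv unfolding sinkorb_def by auto
  have sci: "sinv sv (- i)" using sinv_Compl[OF si] .
  have S: "submod AA M (Si i)" by (rule Si_sub[OF i])
  let ?f = "E (- i)"
  let ?g = "\<lambda>C. sm ?f (SOME c. c \<in> C)"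
  have fA: "?f \<in> AA" using E_Alg[OF sci] .
  have gval: "?g (mcoset M (Si i) x) = sm ?f x" if x: "x \<in> car" for x
  proof -
    obtain s where s: "s \<in> Si i" "(SOME c. c \<in> mcoset M (Si i) x) = ad x s" using rep_props[OF S x] by blast
    obtain m where m: "m \<in> car" "s = sm (E i) m" using s by auto
    have "sm ?f s = z" using E_disj[OF sci si _ m(1)] m by auto
    then show ?thesis using s sm_add[OF fA x] m si sci x by simp
  qed
  have cos: "mcoset M (Si i) x = mcoset M (Si i) (sm ?f x)" if x: "x \<in> car" for x
  proof (rule coset_eq[OF S x])
    show "sm ?f x \<in> car" using x sci by simp
    show "sm (E i) x \<in> Si i" using x by auto
    show "x = ad (sm ?f x) (sm (E i) x)" using E_split[OF si x] add_comm x si sci by simp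
  qed
  show ?thesis unfolding amod_iso_def
  proof (intro conjI ballI)
    show "bij_betw ?g (mcar (quotmod M (Si i))) (mcar (Qmod M ?f))"
      unfolding bij_betw_def quot_car
    proof
      show "inj_on ?g (mcoset M (Si i) ` car)"
      proof (rule inj_onI, clarify)
        fix x y assume x: "x \<in> car" and y: "y \<in> car" and e: "?g (mcoset M (Si i) x) = ?g (mcoset M (Si i) y)"
        then have "sm ?f x = sm ?f y" using gval by simp
        then show "mcoset M (Si i) x = mcoset M (Si i) y" using cos x y by metis
      qed
      show "?g ` mcoset M (Si i) ` car = mcar (Qmod M ?f)"
        unfolding Qmod_def using gval by (auto simp: image_image)
    qed
  next
    fix C D assume "C \<in> mcar (quotmod M (Si i))" "D \<in> mcar (quotmod M (Si i))"
    then obtain x y where xy: "x \<in> car" "y \<in> car" "C = mcoset M (Si i) x" "D = mcoset M (Si i) y"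
      unfolding quot_car by auto
    show "?g (madd (quotmod M (Si i)) C D) = madd (Qmod M ?f) (?g C) (?g D)"
      using xy quot_add[OF S] gval sm_add[OF fA] by (simp add: Qmod_def)
  next
    fix a :: "('v,'e) qpath \<Rightarrow> 'k" and C assume a: "a \<in> AA" and "C \<in> mcar (quotmod M (Si i))"
    then obtain x where x: "x \<in> car" "C = mcoset M (Si i) x"
      unfolding quot_car by auto
    show "?g (msmult (quotmod M (Si i)) a C) = msmult (Qmod M ?f) a (?g C)"
      using x quot_sm[OF S x(1) a] gval a proj_lemma[OF i a x(1)] by (simp add: Qmod_def)
  qed
qed

lemma Si_kills: "sinkorb i \<Longrightarrow> \<forall>s\<in>Si i. sm (E (- i)) s = z"
  using E_disj orbit_sinv sinv_Compl unfolding sinkorb_def by auto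

lemma Q_kills: assumes "sinkorb i"
  shows "\<forall>y\<in>mcar (Qmod M (E (- i))). msmult (Qmod M (E (- i))) (E i) y = mzero (Qmod M (E (- i)))"
proof -
  have si: "sinv sv i" using assms orbit_sinv unfolding sinkorb_def by auto
  have sci: "sinv sv (- i)" using sinv_Compl[OF si] .
  show ?thesis unfolding Qmod_def using E_disj[OF si sci] E_disj[OF sci si] si sci E_Alg[OF sci] by auto
qed

lemma Si_nonzero: "i \<in> nz \<Longrightarrow> \<exists>s\<in>Si i. s \<noteq> z"
  unfolding nz_def kills_def by auto

lemma Q_nonzero:
  assumes i: "sinkorb i" and j: "j \<in> nz" "j \<noteq> i"
  shows "\<exists>y\<in>mcar (Qmod M (E (- i))). y \<noteq> z"
proof -
  have iI: "i \<in> Iset sv" using i unfolding sinkorb_def by auto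
  have jI: "j \<in> Iset sv" using j nz_sub by auto
  have si: "sinv sv i" using orbit_sinv[OF iI] .
  have sj: "sinv sv j" using orbit_sinv[OF jI] .
  have sci: "sinv sv (- i)" using sinv_Compl[OF si] .
  obtain x where x: "x \<in> car" "sm (E j) x \<noteq> z" using j unfolding nz_def kills_def by auto
  have "- i \<inter> j = j" using orbit_disj[OF iI jI] j by auto
  then have "sm (E (- i)) (sm (E j) x) = sm (E j) x" using E_E[OF sci sj x(1)] by simp
  then show ?thesis unfolding Qmod_def using x sj by (auto intro!: bexI[of _ "sm (E j) x"] image_eqI[of _ _ "sm (E j) x"])
qed

end

definition Kl :: "('r, 'm) amod \<Rightarrow> 'r \<Rightarrow> bool" where
  "Kl N a \<longleftrightarrow> (\<forall>x\<in>mcar N. msmult N a x = mzero N)"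

context qs begin

definition chooseorb :: "'v set set \<Rightarrow> 'v set" where
  "chooseorb Z = (SOME i. i \<in> Z \<and> (\<forall>v\<in>i. \<forall>as. pvalid src tgt v as \<and> as \<noteq> [] \<longrightarrow> vorb sv (pend tgt v as) \<notin> Z))"

lemma iso_K_amod:
  assumes f: "amod_iso (Alg src tgt sv se q) Nm Nm2 f" and Nm: "is_amod src tgt sv se q Nm"
    and Nm2: "is_amod src tgt sv se q Nm2" and a: "a \<in> Alg src tgt sv se q"
  shows "Kl Nm a \<longleftrightarrow> Kl Nm2 a"
proof -
  interpret n: qmod src tgt sv se q N Nm by (rule qmodI[OF Nm])
  have fz: "f (mzero Nm) = mzero Nm2" by (rule iso_zero[OF f n.zero_in _ Nm2]) simp
  show ?thesis unfolding Kl_def by (rule iso_kills[OF f fz n.zero_in a]) (simp add: a)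
qed

lemma iso_K_quot:
  assumes f: "amod_iso (Alg src tgt sv se q) (quotmod M S) Nm2 f" and M: "is_amod src tgt sv se q M"
    and S: "submod (Alg src tgt sv se q) M S"
    and Nm2: "is_amod src tgt sv se q Nm2" and a: "a \<in> Alg src tgt sv se q"
  shows "Kl (quotmod M S) a \<longleftrightarrow> Kl Nm2 a"
proof -
  interpret m: qmod src tgt sv se q N M by (rule qmodI[OF M])
  note p = m.quot_pre[OF S]
  have fz: "f (mzero (quotmod M S)) = mzero Nm2" by (rule iso_zero[OF f p(1) p(2) Nm2])
  show ?thesis unfolding Kl_def by (rule iso_kills[OF f fz p(1) a]) (rule p(4)[OF a])
qed

lemma isom_K_amod:
  assumes f: "amod_isom (Alg src tgt sv se q) Nm Nm2" and Nm: "is_amod src tgt sv se q Nm"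
    and Nm2: "is_amod src tgt sv se q Nm2" and a: "a \<in> Alg src tgt sv se q"
  shows "Kl Nm a \<longleftrightarrow> Kl Nm2 a"
  using f iso_K_amod[OF _ Nm Nm2 a] unfolding amod_isom_def by blast

lemma isom_K_quot:
  assumes f: "amod_isom (Alg src tgt sv se q) (quotmod M S) Nm2" and M: "is_amod src tgt sv se q M"
    and S: "submod (Alg src tgt sv se q) M S"
    and Nm2: "is_amod src tgt sv se q Nm2" and a: "a \<in> Alg src tgt sv se q"
  shows "Kl (quotmod M S) a \<longleftrightarrow> Kl Nm2 a"
  using f iso_K_quot[OF _ M S Nm2 a] unfolding amod_isom_def by blast

end

context qmod begin

lemma chooseorb_sink: assumes "nz \<noteq> {}" shows "chooseorb nz \<in> nz" "sinkorb (chooseorb nz)"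
proof -
  have ex: "\<exists>i. i \<in> nz \<and> (\<forall>v\<in>i. \<forall>as. pvalid src tgt v as \<and> as \<noteq> [] \<longrightarrow> vorb sv (pend tgt v as) \<notin> nz)"
    using maxorb_exists[OF assms nz_sub] by blast
  have "chooseorb nz \<in> nz \<and> (\<forall>v\<in>chooseorb nz. \<forall>as. pvalid src tgt v as \<and> as \<noteq> [] \<longrightarrow> vorb sv (pend tgt v as) \<notin> nz)"
    unfolding chooseorb_def by (rule someI_ex[OF ex])
  then show "chooseorb nz \<in> nz" "sinkorb (chooseorb nz)" unfolding sinkorb_def using nz_sub by auto
qed

lemma kills_Kl: "kills a \<longleftrightarrow> Kl M a"
  unfolding kills_def Kl_def by simp

lemma kills_decomp: assumes S: "submod AA M S" and j: "j \<in> Iset sv"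
  shows "kills (E j) \<longleftrightarrow> Kl (M\<lparr>mcar := S\<rparr>) (E j) \<and> Kl (quotmod M S) (E j)"
  using kills_split[OF S orbit_sinv[OF j]] quot_kills_iff[OF S E_Alg[OF orbit_sinv[OF j]]]
  unfolding Kl_def by simp

end

context qs begin

lemma unique_sub:
  fixes M M' Y' X' :: "(('v,'e) qpath \<Rightarrow> 'k::field, 'm) amod"
  assumes M: "is_amod src tgt sv se q M" and M': "is_amod src tgt sv se q M'"
    and nz': "qmod.nz sv M' \<noteq> {}"
    and Y': "is_amod src tgt sv se q Y'" and X': "is_amod src tgt sv se q X'"
    and iY: "amod_isom (Alg src tgt sv se q)
               (M'\<lparr>mcar := msmult M' (eidem (chooseorb (qmod.nz sv M'))) ` mcar M'\<rparr>) Y'"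
    and iX: "amod_isom (Alg src tgt sv se q) (Qmod M' (eidem (- chooseorb (qmod.nz sv M')))) X'"
    and S: "submod (Alg src tgt sv se q) M S"
    and jY: "amod_isom (Alg src tgt sv se q) (M\<lparr>mcar := S\<rparr>) Y'"
    and jX: "amod_isom (Alg src tgt sv se q) (quotmod M S) X'"
  shows "qmod.nz sv M = qmod.nz sv M'" "S = msmult M (eidem (chooseorb (qmod.nz sv M'))) ` mcar M"
proof -
  interpret m: qmod src tgt sv se q N M by (rule qmodI[OF M])
  interpret m': qmod src tgt sv se q N M' by (rule qmodI[OF M'])
  let ?i = "chooseorb m'.nz"
  have ci: "?i \<in> m'.nz" "m'.sinkorb ?i" using m'.chooseorb_sink[OF nz'] by auto
  have S': "submod (Alg src tgt sv se q) M' (m'.Si ?i)" by (rule m'.Si_sub[OF ci(2)])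
  have subM: "is_amod src tgt sv se q (M\<lparr>mcar := S\<rparr>)" by (rule m.sub_is_amod[OF S])
  have subM': "is_amod src tgt sv se q (M'\<lparr>mcar := m'.Si ?i\<rparr>)" by (rule m'.sub_is_amod[OF S'])
  have QM': "is_amod src tgt sv se q (Qmod M' (eidem (- ?i)))" by (rule m'.Qmod_amod[OF ci(2)])
  have kk: "m.kills (m.E j) \<longleftrightarrow> m'.kills (m'.E j)" if j: "j \<in> Iset sv" for j
  proof -
    have a: "m.E j \<in> Alg src tgt sv se q" using eidem_Alg[OF orbit_sinv[OF j]] .
    have "m.kills (m.E j) \<longleftrightarrow> Kl (M\<lparr>mcar := S\<rparr>) (m.E j) \<and> Kl (quotmod M S) (m.E j)"
      by (rule m.kills_decomp[OF S j])
    also have "\<dots> \<longleftrightarrow> Kl Y' (m.E j) \<and> Kl X' (m.E j)"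
      using isom_K_amod[OF jY subM Y' a] isom_K_quot[OF jX M S X' a] by simp
    also have "\<dots> \<longleftrightarrow> Kl (M'\<lparr>mcar := m'.Si ?i\<rparr>) (m.E j) \<and> Kl (Qmod M' (eidem (- ?i))) (m.E j)"
      using isom_K_amod[OF iY subM' Y' a] isom_K_amod[OF iX QM' X' a] by simp
    also have "Kl (Qmod M' (eidem (- ?i))) (m.E j) \<longleftrightarrow> Kl (quotmod M' (m'.Si ?i)) (m.E j)"
      using iso_K_quot[OF m'.quot_Q_iso[OF ci(2)] M' S' QM' a] by simp
    also have "Kl (M'\<lparr>mcar := m'.Si ?i\<rparr>) (m.E j) \<and> Kl (quotmod M' (m'.Si ?i)) (m.E j) \<longleftrightarrow> m'.kills (m'.E j)"
      using m'.kills_decomp[OF S' j] by simp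
    finally show ?thesis .
  qed
  show nzeq: "m.nz = m'.nz" unfolding m.nz_def m'.nz_def using kk by auto
  have iI: "?i \<in> Iset sv" using ci m'.nz_sub by auto
  have si: "sinv sv ?i" using orbit_sinv[OF iI] .
  have sci: "sinv sv (- ?i)" using sinv_Compl[OF si] .
  have aci: "m.E (- ?i) \<in> Alg src tgt sv se q" using eidem_Alg[OF sci] .
  have ai: "m.E ?i \<in> Alg src tgt sv se q" using eidem_Alg[OF si] .
  have k1: "Kl (M'\<lparr>mcar := m'.Si ?i\<rparr>) (m.E (- ?i))"
    using m'.Si_kills[OF ci(2)] unfolding Kl_def by simp
  then have "Kl (M\<lparr>mcar := S\<rparr>) (m.E (- ?i))"
    using isom_K_amod[OF iY subM' Y' aci] isom_K_amod[OF jY subM Y' aci] by simp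
  then have h1: "\<forall>s\<in>S. m.sm (m.E (- ?i)) s = m.z" unfolding Kl_def by simp
  have k2: "Kl (Qmod M' (eidem (- ?i))) (m.E ?i)"
    using m'.Q_kills[OF ci(2)] unfolding Kl_def by simp
  then have "Kl (quotmod M S) (m.E ?i)"
    using isom_K_amod[OF iX QM' X' ai] isom_K_quot[OF jX M S X' ai] by simp
  then have h2: "\<forall>x\<in>m.car. m.sm (m.E ?i) x \<in> S"
    using m.quot_kills_iff[OF S ai] unfolding Kl_def by simp
  note d = m.submodD[OF S]
  show "S = m.Si ?i"
  proof
    show "S \<subseteq> m.Si ?i"
    proof
      fix s assume s: "s \<in> S"
      then have sc: "s \<in> m.car" using d by auto
      have "s = m.ad (m.sm (m.E ?i) s) (m.sm (m.E (- ?i)) s)" by (rule m.E_split[OF si sc])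
      also have "\<dots> = m.sm (m.E ?i) s" using h1 s sc si by simp
      finally show "s \<in> m.Si ?i" using sc by (metis imageI)
    qed
    show "m.Si ?i \<subseteq> S" using h2 by auto
  qed
qed

end

context qs begin

lemma amod_closures:
  assumes "is_amod src tgt sv se q M"
  shows "\<And>x y. x \<in> mcar M \<Longrightarrow> y \<in> mcar M \<Longrightarrow> madd M x y \<in> mcar M"
    "\<And>a x. a \<in> Alg src tgt sv se q \<Longrightarrow> x \<in> mcar M \<Longrightarrow> msmult M a x \<in> mcar M"
proof -
  interpret m: qmod src tgt sv se q N M by (rule qmodI[OF assms])
  show "\<And>x y. x \<in> mcar M \<Longrightarrow> y \<in> mcar M \<Longrightarrow> madd M x y \<in> mcar M" by simp
  show "\<And>a x. a \<in> Alg src tgt sv se q \<Longrightarrow> x \<in> mcar M \<Longrightarrow> msmult M a x \<in> mcar M" by simp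
qed

lemma isom_sym:
  assumes "amod_isom (Alg src tgt sv se q) M M'" "is_amod src tgt sv se q M"
  shows "amod_isom (Alg src tgt sv se q) M' M"
  using assms iso_sym[OF _ amod_closures[OF assms(2)]] unfolding amod_isom_def by blast

lemma isom_trans:
  "amod_isom A M M' \<Longrightarrow> amod_isom A M' M'' \<Longrightarrow> amod_isom A M M''"
  unfolding amod_isom_def using iso_trans by blast

lemma equiv_iso: "equiv (AMods src tgt sv se q) (isorel src tgt sv se q :: ((('v,'e) qpath \<Rightarrow> 'k::field, nat) amod \<times> _) set)"
proof (rule equivI)
  show "(isorel src tgt sv se q :: ((('v,'e) qpath \<Rightarrow> 'k::field, nat) amod \<times> _) set) \<subseteq> AMods src tgt sv se q \<times> AMods src tgt sv se q"
    by (auto simp: isorel_def)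
  show "refl_on (AMods src tgt sv se q) (isorel src tgt sv se q :: ((('v,'e) qpath \<Rightarrow> 'k::field, nat) amod \<times> _) set)"
    by (auto simp: refl_on_def isorel_def amod_isom_def intro: iso_id)
  show "sym (isorel src tgt sv se q :: ((('v,'e) qpath \<Rightarrow> 'k::field, nat) amod \<times> _) set)"
    unfolding sym_def isorel_def AMods_def using isom_sym by blast
  show "trans (isorel src tgt sv se q :: ((('v,'e) qpath \<Rightarrow> 'k::field, nat) amod \<times> _) set)"
    unfolding trans_def isorel_def AMods_def using isom_trans by blast
qed

lemma class_props:
  fixes C :: "(('v,'e) qpath \<Rightarrow> 'k::field, nat) amod set"
  assumes C: "C \<in> isoclasses src tgt sv se q"
  shows "crep C \<in> C" "crep C \<in> AMods src tgt sv se q" "C = isorel src tgt sv se q `` {crep C}"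
proof -
  obtain M0 where M0: "M0 \<in> AMods src tgt sv se q" "C = isorel src tgt sv se q `` {M0}"
    using C unfolding isoclasses_def by (auto elim: quotientE)
  have "M0 \<in> C" using M0 equiv_iso unfolding equiv_def refl_on_def by blast
  then show c: "crep C \<in> C" unfolding crep_def by (rule someI)
  then have r: "(M0, crep C) \<in> isorel src tgt sv se q" using M0 by simp
  then show "crep C \<in> AMods src tgt sv se q" unfolding isorel_def by simp
  show "C = isorel src tgt sv se q `` {crep C}" using M0(2) equiv_class_eq[OF equiv_iso r] by simp
qed

lemma class_of:
  fixes M :: "(('v,'e) qpath \<Rightarrow> 'k::field, nat) amod"
  assumes M: "M \<in> AMods src tgt sv se q"
  shows "isorel src tgt sv se q `` {M} \<in> isoclasses src tgt sv se q"
    "amod_isom (Alg src tgt sv se q) M (crep (isorel src tgt sv se q `` {M}))"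
proof -
  show cl: "isorel src tgt sv se q `` {M} \<in> isoclasses src tgt sv se q"
    unfolding isoclasses_def using M by (rule quotientI)
  define c where "c = crep (isorel src tgt sv se q `` {M})"
  have "c \<in> isorel src tgt sv se q `` {M}"
    using class_props(1)[OF cl] unfolding c_def .
  then have "(M, c) \<in> isorel src tgt sv se q" by (simp only: Image_singleton_iff)
  then have "amod_isom (Alg src tgt sv se q) M c" unfolding isorel_def by simp
  then show "amod_isom (Alg src tgt sv se q) M (crep (isorel src tgt sv se q `` {M}))"
    unfolding c_def .
qed

lemma class_eqI:
  fixes M :: "(('v,'e) qpath \<Rightarrow> 'k::field, nat) amod"
  assumes C: "C \<in> isoclasses src tgt sv se q" and M: "M \<in> AMods src tgt sv se q"
    and iso: "amod_isom (Alg src tgt sv se q) M (crep C)"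
  shows "isorel src tgt sv se q `` {M} = C"
proof -
  have "(M, crep C) \<in> isorel src tgt sv se q" using iso M class_props(2)[OF C] unfolding isorel_def by simp
  then show ?thesis using equiv_class_eq[OF equiv_iso] class_props(3)[OF C] by metis
qed

definition Ysub :: "(('v,'e) qpath \<Rightarrow> 'k::field, nat) amod \<Rightarrow> (('v,'e) qpath \<Rightarrow> 'k, nat) amod" where
  "Ysub M = M\<lparr>mcar := msmult M (eidem (chooseorb (qmod.nz sv M))) ` mcar M\<rparr>"

definition Xq :: "(('v,'e) qpath \<Rightarrow> 'k::field, nat) amod \<Rightarrow> (('v,'e) qpath \<Rightarrow> 'k, nat) amod" where
  "Xq M = Qmod M (eidem (- chooseorb (qmod.nz sv M)))"

definition prc :: "(('v,'e) qpath \<Rightarrow> 'k::field, nat) amod \<Rightarrow> _" where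
  "prc M = (isorel src tgt sv se q `` {Xq M}, isorel src tgt sv se q `` {Ysub M})"

lemma Y_X_amod:
  fixes M :: "(('v,'e) qpath \<Rightarrow> 'k::field, nat) amod"
  assumes M: "is_amod src tgt sv se q M" and nz: "qmod.nz sv M \<noteq> {}"
  shows "Ysub M \<in> AMods src tgt sv se q" "Xq M \<in> AMods src tgt sv se q"
proof -
  interpret m: qmod src tgt sv se q N M by (rule qmodI[OF M])
  have ci: "m.sinkorb (chooseorb m.nz)" using m.chooseorb_sink[OF nz] by auto
  show "Ysub M \<in> AMods src tgt sv se q" unfolding Ysub_def AMods_def
    using m.sub_is_amod[OF m.Si_sub[OF ci]] by simp
  show "Xq M \<in> AMods src tgt sv se q" unfolding Xq_def AMods_def
    using m.Qmod_amod[OF ci] by simp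
qed

lemma count_pairs:
  fixes M M' :: "(('v,'e) qpath \<Rightarrow> 'k::field, nat) amod"
  assumes M: "is_amod src tgt sv se q M" and M': "is_amod src tgt sv se q M'"
    and nz: "qmod.nz sv M \<noteq> {}" and nz': "qmod.nz sv M' \<noteq> {}"
  shows "hall_num (Alg src tgt sv se q) M (crep (fst (prc M'))) (crep (snd (prc M'))) =
           (if prc M' = prc M then 1 else 0)"
proof -
  interpret m: qmod src tgt sv se q N M by (rule qmodI[OF M])
  interpret m': qmod src tgt sv se q N M' by (rule qmodI[OF M'])
  let ?A = "Alg src tgt sv se q"
  let ?X' = "isorel src tgt sv se q `` {Xq M'}"
  let ?Y' = "isorel src tgt sv se q `` {Ysub M'}"
  let ?i = "chooseorb m.nz"
  have ci: "m.sinkorb ?i" using m.chooseorb_sink[OF nz] by auto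
  have YA': "Ysub M' \<in> AMods src tgt sv se q" and XA': "Xq M' \<in> AMods src tgt sv se q"
    using Y_X_amod[OF M' nz'] by auto
  have YA: "Ysub M \<in> AMods src tgt sv se q" and XA: "Xq M \<in> AMods src tgt sv se q"
    using Y_X_amod[OF M nz] by auto
  note cY' = class_of[OF YA'] and cX' = class_of[OF XA']
  have crY: "is_amod src tgt sv se q (crep ?Y')" using class_props(2)[OF cY'(1)] unfolding AMods_def by simp
  have crX: "is_amod src tgt sv se q (crep ?X')" using class_props(2)[OF cX'(1)] unfolding AMods_def by simp
  define YY where "YY = crep ?Y'"
  define XX where "XX = crep ?X'"
  have cy: "amod_isom ?A (Ysub M') YY" using cY'(2) unfolding YY_def .
  have cx: "amod_isom ?A (Xq M') XX" using cX'(2) unfolding XX_def .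
  define SS where "SS = {S. submod ?A M S \<and> amod_isom ?A (M\<lparr>mcar := S\<rparr>) YY \<and>
                               amod_isom ?A (quotmod M S) XX}"
  have hn: "hall_num ?A M (crep (fst (prc M'))) (crep (snd (prc M'))) = card SS"
    unfolding hall_num_def SS_def prc_def YY_def XX_def by simp
  have uniq: "S = m.Si ?i \<and> prc M' = prc M" if S: "S \<in> SS" for S
  proof -
    have Ssub: "submod ?A M S" and jY: "amod_isom ?A (M\<lparr>mcar := S\<rparr>) YY"
      and jX: "amod_isom ?A (quotmod M S) XX" using S unfolding SS_def by auto
    have u: "m.nz = m'.nz" "S = msmult M (eidem (chooseorb m'.nz)) ` mcar M"
      using unique_sub[OF M M' nz' crY[folded YY_def] crX[folded XX_def] cy[unfolded Ysub_def] cx[unfolded Xq_def] Ssub jY jX]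
      by auto
    then have SSi: "S = m.Si ?i" by simp
    have eY: "isorel src tgt sv se q `` {Ysub M} = ?Y'"
      by (rule class_eqI[OF cY'(1) YA]) (use jY SSi in \<open>simp add: Ysub_def YY_def\<close>)
    have subS: "submod ?A M (m.Si ?i)" by (rule m.Si_sub[OF ci])
    have g: "amod_isom ?A (quotmod M (m.Si ?i)) (Xq M)"
      unfolding amod_isom_def Xq_def using m.quot_Q_iso[OF ci] by blast
    have g': "amod_isom ?A (Xq M) (quotmod M (m.Si ?i))"
      using g iso_sym[OF _ m.quot_pre(3)[OF subS] m.quot_pre(4)[OF subS]] unfolding amod_isom_def by blast
    have eX: "isorel src tgt sv se q `` {Xq M} = ?X'"
      by (rule class_eqI[OF cX'(1) XA]) (rule isom_trans[OF g' jX[unfolded SSi XX_def]])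
    show ?thesis using SSi eX eY unfolding prc_def by simp
  qed
  show ?thesis
  proof (cases "prc M' = prc M")
    case True
    have "SS = {m.Si ?i}"
    proof
      show "SS \<subseteq> {m.Si ?i}" using uniq by auto
      have subS: "submod ?A M (m.Si ?i)" by (rule m.Si_sub[OF ci])
      have e1: "?Y' = isorel src tgt sv se q `` {Ysub M}" and e2: "?X' = isorel src tgt sv se q `` {Xq M}"
        using True unfolding prc_def by auto
      have a1: "amod_isom ?A (M\<lparr>mcar := m.Si ?i\<rparr>) YY"
        unfolding YY_def e1 using class_of(2)[OF YA] by (simp add: Ysub_def)
      have g: "amod_isom ?A (quotmod M (m.Si ?i)) (Xq M)"
        unfolding amod_isom_def Xq_def using m.quot_Q_iso[OF ci] by blast
      have a2: "amod_isom ?A (quotmod M (m.Si ?i)) XX"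
        unfolding XX_def e2 by (rule isom_trans[OF g class_of(2)[OF XA]])
      show "{m.Si ?i} \<subseteq> SS" unfolding SS_def using subS a1 a2 by simp
    qed
    then show ?thesis using hn True by simp
  next
    case False
    then have "SS = {}" using uniq by auto
    then show ?thesis using hn False by simp
  qed
qed

lemma prc_props:
  fixes M :: "(('v,'e) qpath \<Rightarrow> 'k::field, nat) amod"
  assumes M: "is_amod src tgt sv se q M" and two: "j \<in> qmod.nz sv M" "j' \<in> qmod.nz sv M" "j \<noteq> j'"
  shows "fst (prc M) \<in> isoclasses src tgt sv se q" "snd (prc M) \<in> isoclasses src tgt sv se q"
    "fst (prc M) \<noteq> zclass src tgt sv se q" "snd (prc M) \<noteq> zclass src tgt sv se q"
proof -
  interpret m: qmod src tgt sv se q N M by (rule qmodI[OF M])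
  have nz: "m.nz \<noteq> {}" using two by auto
  let ?i = "chooseorb m.nz"
  have ci: "?i \<in> m.nz" "m.sinkorb ?i" using m.chooseorb_sink[OF nz] by auto
  obtain j0 where j0: "j0 \<in> m.nz" "j0 \<noteq> ?i" using two by metis
  have YA: "Ysub M \<in> AMods src tgt sv se q" and XA: "Xq M \<in> AMods src tgt sv se q"
    using Y_X_amod[OF M nz] by auto
  show "fst (prc M) \<in> isoclasses src tgt sv se q" "snd (prc M) \<in> isoclasses src tgt sv se q"
    unfolding prc_def using class_of(1)[OF YA] class_of(1)[OF XA] by auto
  have big: "card (mcar N') \<noteq> 1" if "finite (mcar N')" "mzero N' \<in> mcar N'" "\<exists>y\<in>mcar N'. y \<noteq> mzero N'"
    for N' :: "(('v,'e) qpath \<Rightarrow> 'k, nat) amod"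
    using that by (metis card_1_singletonE singletonD)
  have notz: "isorel src tgt sv se q `` {N'} \<noteq> zclass src tgt sv se q"
    if "N' \<in> AMods src tgt sv se q" "card (mcar N') \<noteq> 1" for N' :: "(('v,'e) qpath \<Rightarrow> 'k, nat) amod"
  proof
    assume e: "isorel src tgt sv se q `` {N'} = zclass src tgt sv se q"
    have "N' \<in> isorel src tgt sv se q `` {N'}" using that equiv_iso unfolding equiv_def refl_on_def by blast
    then have "(zmod, N') \<in> isorel src tgt sv se q" using e unfolding zclass_def by simp
    then have "card (mcar (zmod :: (('v,'e) qpath \<Rightarrow> 'k, nat) amod)) = card (mcar N')"
      unfolding isorel_def amod_isom_def using iso_card by blast
    then show False using that by (simp add: zmod_def)
  qed
  interpret y: qmod src tgt sv se q N "Ysub M" using YA unfolding AMods_def by (intro qmodI) simp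
  interpret x: qmod src tgt sv se q N "Xq M" using XA unfolding AMods_def by (intro qmodI) simp
  have "card (mcar (Ysub M)) \<noteq> 1"
    using big[OF y.fin y.zero_in] m.Si_nonzero[OF ci(1)] unfolding Ysub_def by simp
  then show "snd (prc M) \<noteq> zclass src tgt sv se q" unfolding prc_def using notz[OF YA] by simp
  have "card (mcar (Xq M)) \<noteq> 1"
    using big[OF x.fin x.zero_in] m.Q_nonzero[OF ci(2) j0] unfolding Xq_def by (simp add: Qmod_def)
  then show "fst (prc M) \<noteq> zclass src tgt sv se q" unfolding prc_def using notz[OF XA] by simp
qed

end

context qs begin

lemma torb_horb: "torb src sv \<rho> \<noteq> horb tgt sv \<rho>"
  unfolding torb_def horb_def by (rule arrow_orbits)

lemma two_support:
  assumes a: "\<alpha> \<in> fundamental_set src tgt sv se"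
  shows "\<exists>j1 j2. j1 \<in> Iset sv \<and> j2 \<in> Iset sv \<and> \<alpha> j1 \<noteq> 0 \<and> \<alpha> j2 \<noteq> 0 \<and> j1 \<noteq> j2"
proof (rule ccontr)
  assume H: "\<not> ?thesis"
  have nonneg: "\<And>i. 0 \<le> \<alpha> i" and out: "\<And>i. i \<notin> Iset sv \<Longrightarrow> \<alpha> i = 0"
    and conn: "gamma_connected src tgt sv se {i \<in> Iset sv. \<alpha> i \<noteq> 0}"
    and neg: "\<And>i. i \<in> Iset sv \<Longrightarrow> symform src tgt sv se \<alpha> (unitv i) \<le> 0"
    using a unfolding fundamental_set_def by auto
  obtain i where i: "i \<in> Iset sv" "\<alpha> i \<noteq> 0" using conn unfolding gamma_connected_def by auto
  have supp: "j = i" if "\<alpha> j \<noteq> 0" for j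
    using H i that out by metis
  have s1: "(\<Sum>j\<in>Iset sv. int (card j) * \<alpha> j * unitv i j) = int (card i) * \<alpha> i"
  proof -
    have "(\<Sum>j\<in>Iset sv. int (card j) * \<alpha> j * unitv i j) = (\<Sum>j\<in>Iset sv. if j = i then int (card i) * \<alpha> i else 0)"
      by (rule sum.cong) (auto simp: unitv_def)
    also have "\<dots> = int (card i) * \<alpha> i" using i finite_Iset by simp
    finally show ?thesis .
  qed
  have s1': "(\<Sum>j\<in>Iset sv. int (card j) * unitv i j * \<alpha> j) = int (card i) * \<alpha> i"
    using s1 by (simp add: mult.commute mult.left_commute)
  have s2: "(\<Sum>\<rho>\<in>Gam1 se. int (card \<rho>) * \<alpha> (torb src sv \<rho>) * unitv i (horb tgt sv \<rho>)) = 0"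
  proof (rule sum.neutral, rule ballI)
    fix \<rho> :: "'e set"
    show "int (card \<rho>) * \<alpha> (torb src sv \<rho>) * unitv i (horb tgt sv \<rho>) = 0"
    proof (cases "\<alpha> (torb src sv \<rho>) = 0")
      case False
      then have "torb src sv \<rho> = i" by (rule supp)
      then have "horb tgt sv \<rho> \<noteq> i" using torb_horb[of \<rho>] by simp
      then show ?thesis by (simp add: unitv_def)
    qed simp
  qed
  have s3: "(\<Sum>\<rho>\<in>Gam1 se. int (card \<rho>) * unitv i (torb src sv \<rho>) * \<alpha> (horb tgt sv \<rho>)) = 0"
  proof (rule sum.neutral, rule ballI)
    fix \<rho> :: "'e set"
    show "int (card \<rho>) * unitv i (torb src sv \<rho>) * \<alpha> (horb tgt sv \<rho>) = 0"
    proof (cases "\<alpha> (horb tgt sv \<rho>) = 0")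
      case False
      then have "horb tgt sv \<rho> = i" by (rule supp)
      then have "torb src sv \<rho> \<noteq> i" using torb_horb[of \<rho>] by simp
      then show ?thesis by (simp add: unitv_def)
    qed simp
  qed
  have "symform src tgt sv se \<alpha> (unitv i) = 2 * int (card i) * \<alpha> i"
    unfolding symform_def euler_def using s1 s1' s2 s3 by simp
  moreover have "int (card i) > 0" using orbit_nonempty[OF i(1)] by simp
  moreover have "\<alpha> i > 0" using nonneg[of i] i by simp
  ultimately have "symform src tgt sv se \<alpha> (unitv i) > 0" by simp
  then show False using neg[OF i(1)] by simp
qed

lemma dimv_nz:
  fixes M :: "(('v,'e) qpath \<Rightarrow> 'k::field, 'm) amod"
  assumes M: "is_amod src tgt sv se q M" and j: "j \<in> Iset sv" and d: "dimv sv q M j \<noteq> 0"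
  shows "j \<in> qmod.nz sv M"
proof (rule ccontr)
  interpret m: qmod src tgt sv se q N M by (rule qmodI[OF M])
  assume "j \<notin> m.nz"
  then have k: "m.kills (m.E j)" unfolding m.nz_def using j by auto
  have "m.sm (m.E j) ` m.car = {m.z}" using k m.zero_in unfolding m.kills_def by (auto simp: image_iff intro!: exI[of _ m.z])
  then have c: "card (m.sm (m.E j) ` m.car) = 1" by simp
  have cj: "card j \<ge> 1" using orbit_nonempty[OF j] .
  have "(THE d. card (m.sm (m.E j) ` m.car) = q ^ (card j * d)) = 0"
  proof (rule the_equality)
    show "card (m.sm (m.E j) ` m.car) = q ^ (card j * 0)" using c by simp
    fix d assume "card (m.sm (m.E j) ` m.car) = q ^ (card j * d)"
    then have e: "q ^ (card j * d) = 1" using c by simp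
    show "d = 0"
    proof (rule ccontr)
      assume "d \<noteq> 0"
      then have "card j * d > 0" using cj by simp
      then have "1 < q ^ (card j * d)" using q2 by (intro one_less_power) auto
      then show False using e by simp
    qed
  qed
  then have "dimv sv q M j = 0" unfolding dimv_def using j by simp
  then show False using d by simp
qed

lemma aut_pos:
  fixes M :: "(('v,'e) qpath \<Rightarrow> 'k::field, 'm) amod"
  assumes M: "is_amod src tgt sv se q M"
  shows "aut_num (Alg src tgt sv se q) M > 0"
proof -
  interpret m: qmod src tgt sv se q N M by (rule qmodI[OF M])
  let ?S = "{f \<in> mcar M \<rightarrow>\<^sub>E mcar M. amod_iso (Alg src tgt sv se q) M M f}"
  have fin: "finite ?S" using m.fin by (intro finite_subset[OF _ finite_PiE[of "mcar M" "\<lambda>_. mcar M"]]) auto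
  have "(\<lambda>x\<in>mcar M. x) \<in> ?S"
    unfolding amod_iso_def by (auto simp: bij_betw_def inj_on_def)
  then have "?S \<noteq> {}" by blast
  then show ?thesis unfolding aut_num_def using fin by (simp add: card_gt_0_iff)
qed

end

context qs begin

lemma main:
  fixes \<alpha> :: "'v set \<Rightarrow> int"
    and x :: "(('v,'e) qpath \<Rightarrow> 'k::field, nat) amod set \<Rightarrow> complex"
  assumes fa: "\<alpha> \<in> fundamental_set src tgt sv se"
    and xp: "x \<in> hall_prim src tgt sv se q \<alpha>"
  shows "hall_I src tgt sv se q \<alpha> x = 0"
proof -
  let ?A = "Alg src tgt sv se q"
  define P where "P = {C \<in> isoclasses src tgt sv se q. x C \<noteq> 0}"
  have finx: "finite {C. x C \<noteq> 0}" and supp: "\<And>C. x C \<noteq> 0 \<Longrightarrow> C \<in> classes_dim src tgt sv se q \<alpha>"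
    using xp unfolding hall_prim_def hall_hom_def by auto
  have prim: "\<And>X Y. X \<in> isoclasses src tgt sv se q \<Longrightarrow> Y \<in> isoclasses src tgt sv se q \<Longrightarrow>
       hall_coprod src tgt sv se q x X Y =
         (if Y = zclass src tgt sv se q then x X else 0) + (if X = zclass src tgt sv se q then x Y else 0)"
    using xp unfolding hall_prim_def by auto
  have finP: "finite P" unfolding P_def by (rule finite_subset[OF _ finx]) auto
  obtain j1 j2 where j: "j1 \<in> Iset sv" "j2 \<in> Iset sv" "\<alpha> j1 \<noteq> 0" "\<alpha> j2 \<noteq> 0" "j1 \<noteq> j2"
    using two_support[OF fa] by blast
  have PM: "is_amod src tgt sv se q (crep C) \<and> j1 \<in> qmod.nz sv (crep C) \<and> j2 \<in> qmod.nz sv (crep C)"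
    if C: "C \<in> P" for C
  proof -
    have Cd: "C \<in> classes_dim src tgt sv se q \<alpha>" using C supp unfolding P_def by auto
    then have Ci: "C \<in> isoclasses src tgt sv se q" and dv: "dimv sv q (crep C) = \<alpha>"
      unfolding classes_dim_def by auto
    have M: "is_amod src tgt sv se q (crep C)" using class_props(2)[OF Ci] unfolding AMods_def by simp
    show ?thesis using M dimv_nz[OF M j(1)] dimv_nz[OF M j(2)] dv j by simp
  qed
  define T where "T = (\<lambda>C. prc (crep C)) ` P"
  have finT: "finite T" unfolding T_def using finP by simp
  have Tprops: "fst w \<in> isoclasses src tgt sv se q \<and> snd w \<in> isoclasses src tgt sv se q \<and>
      fst w \<noteq> zclass src tgt sv se q \<and> snd w \<noteq> zclass src tgt sv se q" if w: "w \<in> T" for w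
  proof -
    obtain C where C: "C \<in> P" "w = prc (crep C)" using w unfolding T_def by auto
    show ?thesis using prc_props[of "crep C" j1 j2] PM[OF C(1)] j(5) C(2) by simp
  qed
  have cnt: "(\<Sum>w\<in>T. of_nat (hall_num ?A (crep C) (crep (fst w)) (crep (snd w))) :: complex) = 1"
    if C: "C \<in> P" for C
  proof -
    have "(\<Sum>w\<in>T. of_nat (hall_num ?A (crep C) (crep (fst w)) (crep (snd w))) :: complex) =
          (\<Sum>w\<in>T. if w = prc (crep C) then 1 else 0)"
    proof (rule sum.cong[OF refl])
      fix w assume "w \<in> T"
      then obtain C' where C': "C' \<in> P" "w = prc (crep C')" unfolding T_def by auto
      have nz1: "qmod.nz sv (crep C) \<noteq> {}" and nz2: "qmod.nz sv (crep C') \<noteq> {}" using PM C C' by auto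
      show "(of_nat (hall_num ?A (crep C) (crep (fst w)) (crep (snd w))) :: complex) = (if w = prc (crep C) then 1 else 0)"
        using count_pairs[of "crep C" "crep C'"] PM[OF C] PM[OF C'(1)] nz1 nz2 C'(2) by simp
    qed
    also have "\<dots> = 1" using finT C unfolding T_def by (simp add: sum.delta)
    finally show ?thesis .
  qed
  have zero: "(\<Sum>C\<in>P. x C / of_nat (aut_num ?A (crep C)) * of_nat (hall_num ?A (crep C) (crep (fst w)) (crep (snd w)))) = 0"
    if w: "w \<in> T" for w
  proof -
    let ?X = "fst w" and ?Y = "snd w"
    note tp = Tprops[OF w]
    have c0: "hall_coprod src tgt sv se q x ?X ?Y = 0" using prim tp by simp
    define K where "K = complex_of_real (sqrt (real q)) powi
                 euler src tgt sv se (dimv sv q (crep ?X)) (dimv sv q (crep ?Y))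
            * of_nat (aut_num ?A (crep ?X)) * of_nat (aut_num ?A (crep ?Y))"
    have mX: "is_amod src tgt sv se q (crep ?X)" using class_props(2)[of ?X] tp unfolding AMods_def by simp
    have mY: "is_amod src tgt sv se q (crep ?Y)" using class_props(2)[of ?Y] tp unfolding AMods_def by simp
    have sq: "complex_of_real (sqrt (real q)) \<noteq> 0" using q2 by simp
    have K0: "K \<noteq> 0" unfolding K_def using power_int_not_zero[OF disjI1[OF sq]] aut_pos[OF mX] aut_pos[OF mY] by simp
    have "hall_coprod src tgt sv se q x ?X ?Y =
       K * (\<Sum>C\<in>P. x C / of_nat (aut_num ?A (crep C)) * of_nat (hall_num ?A (crep C) (crep ?X) (crep ?Y)))"
      unfolding hall_coprod_def Let_def P_def[symmetric] sum_distrib_left K_def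
      by (rule sum.cong[OF refl]) (simp add: divide_inverse ac_simps)
    then show ?thesis using c0 K0 by simp
  qed
  show ?thesis
  proof (cases "finite (classes_dim src tgt sv se q \<alpha> :: ((('v,'e) qpath \<Rightarrow> 'k, nat) amod set) set)")
    case False
    then show ?thesis unfolding hall_I_def by (rule sum.infinite)
  next
    case True
    have PS: "P \<subseteq> classes_dim src tgt sv se q \<alpha>" unfolding P_def using supp by auto
    have "hall_I src tgt sv se q \<alpha> x = (\<Sum>C\<in>P. x C / of_nat (aut_num ?A (crep C)))"
      unfolding hall_I_def
      by (rule sum.mono_neutral_right[OF True PS]) (auto simp: P_def classes_dim_def)
    also have "\<dots> = (\<Sum>C\<in>P. x C / of_nat (aut_num ?A (crep C)) *
          (\<Sum>w\<in>T. of_nat (hall_num ?A (crep C) (crep (fst w)) (crep (snd w)))))"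
      using cnt by simp
    also have "\<dots> = (\<Sum>C\<in>P. \<Sum>w\<in>T. x C / of_nat (aut_num ?A (crep C)) *
          of_nat (hall_num ?A (crep C) (crep (fst w)) (crep (snd w))))"
      by (simp add: sum_distrib_left)
    also have "\<dots> = (\<Sum>w\<in>T. \<Sum>C\<in>P. x C / of_nat (aut_num ?A (crep C)) *
          of_nat (hall_num ?A (crep C) (crep (fst w)) (crep (snd w))))"
      by (rule sum.swap)
    also have "\<dots> = 0" using zero by simp
    finally show ?thesis .
  qed
qed

end

theorem proposition2p3:
  fixes src tgt :: "'e::finite \<Rightarrow> 'v::finite"
    and sv :: "'v \<Rightarrow> 'v" and se :: "'e \<Rightarrow> 'e"
    and q N :: nat
    and \<alpha> :: "'v set \<Rightarrow> int"
    and x :: "(('v,'e) qpath \<Rightarrow> 'k::{field,finite}, nat) amod set \<Rightarrow> complex"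
  assumes "quiver_aut src tgt sv se"
    and "quiver_acyclic src tgt"
    and "\<exists>p e. prime p \<and> 0 < e \<and> q = p ^ e"
    and "0 < N" and "card (UNIV :: 'k set) = q ^ N"
    and "\<forall>v. (sv ^^ N) v = v" and "\<forall>a. (se ^^ N) a = a"
    and "\<alpha> \<in> fundamental_set src tgt sv se"
    and "x \<in> hall_prim src tgt sv se q \<alpha>"
  shows "hall_I src tgt sv se q \<alpha> x = 0"
proof -
  obtain p e where pe: "prime p" "0 < e" "q = p ^ e" using assms(3) by blast
  have "2 \<le> p" using prime_ge_2_nat[OF pe(1)] .
  moreover have "p \<le> p ^ e" using pe(2) \<open>2 \<le> p\<close> by (simp add: self_le_power)
  ultimately have q2: "2 \<le> q" using pe(3) by simp
  interpret qs src tgt sv se q N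
    by (rule qs.intro) (use assms q2 in auto)
  show ?thesis by (rule main[OF assms(8) assms(9)])
qed

end
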